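(* Let $d\ge 3$ be odd. Then $G_d$ is weakly regular branch over its commutator subgroup $G_d'$: $G_d$ is spherically transitive and $G_d'\times\cdots\times G_d'$ ($d$ factors) is contained in $\psi_1(G_d'\cap \mathrm{St}_{G_d}(\widehat 1))$.
   Context: Let $d\ge 3$, $X=\{1,\dots,d\}$, $T$ the $d$-regular rooted tree with vertex set $X^*$. $\mathrm{Aut}(T)$ is the group of root-preserving automorphisms with product left-to-right: $(gh)(u)=h(g(u))$. Sections $g|_u$ are defined by $g(uv)=g(u)\,g|_u(v)$; we write $g=(g|_1,\dots,g|_d)\lambda_g$ with $\lambda_g\in S_d$ the action on the first level; $e$ is the identity; $\overline{j}\in\{1,\dots,d\}$ denotes $j$ mod $d$. $G_d=\langle a_1,\dots,a_d\rangle\le\mathrm{Aut}(T)$ where $a_i$ acts on the first level as $(i\ \overline{i+1})$, with $a_i|_i=a_i$, $a_i|_{\overline{i+1}}=a_{\overline{i+1}}$, and $a_i|_x=e$ otherwise. $\mathrm{St}_{G}(\widehat 1)$ is the subgroup of elements fixing every vertex of the first level $X$, and $\psi_1:\mathrm{St}_G(\widehat1)\to G^d$, $g\mapsto (g|_1,\dots,g|_d)$ is the (injective) homomorphism. A group is spherically transitive if it acts transitively on each level $X^k$. *)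

theory Defs
  imports "HOL-Algebra.Algebra"
begin

text \<open>Vertices of the d-regular rooted tree: words over the alphabet X = {1..d}.\<close>
definition words :: "nat \<Rightarrow> nat list set" where
  "words d = {w. set w \<subseteq> {1..d}}"

text \<open>Root-preserving tree automorphisms: bijections of the vertex set preserving
  length (levels) and the prefix (edge) relation; extensional off the vertex set.\<close>
definition tree_aut :: "nat \<Rightarrow> (nat list \<Rightarrow> nat list) set" where
  "tree_aut d = {f \<in> Bij (words d).
      (\<forall>u \<in> words d. length (f u) = length u) \<and>
      (\<forall>u v. u @ v \<in> words d \<longrightarrow> take (length u) (f (u @ v)) = f u)}"

text \<open>Aut(T) with left-to-right product: (g h)(u) = h(g(u)).\<close>
definition AutT :: "nat \<Rightarrow> (nat list \<Rightarrow> nat list) monoid" where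
  "AutT d = \<lparr>carrier = tree_aut d,
             monoid.mult = (\<lambda>g h. compose (words d) h g),
             monoid.one = (\<lambda>x \<in> words d. x)\<rparr>"

text \<open>Section g|_u, defined by g(uv) = g(u) g|_u(v).\<close>
definition sect :: "nat \<Rightarrow> (nat list \<Rightarrow> nat list) \<Rightarrow> nat list \<Rightarrow> (nat list \<Rightarrow> nat list)" where
  "sect d g u = (\<lambda>v \<in> words d. drop (length u) (g (u @ v)))"

text \<open>The index \<open>i+1\<close> mod d, taken in {1..d}.\<close>
definition nxt :: "nat \<Rightarrow> nat \<Rightarrow> nat" where
  "nxt d i = i mod d + 1"

text \<open>Action of a_i: on the first level the transposition (i, i+1), with sections
  a_i|_i = a_i, a_i|_{i+1} = a_{i+1}, and trivial sections elsewhere.\<close>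
fun act :: "nat \<Rightarrow> nat \<Rightarrow> nat list \<Rightarrow> nat list" where
  "act d i [] = []"
| "act d i (x # w) =
     (if x = i then nxt d i # act d i w
      else if x = nxt d i then i # act d (nxt d i) w
      else x # w)"

definition gen_a :: "nat \<Rightarrow> nat \<Rightarrow> (nat list \<Rightarrow> nat list)" where
  "gen_a d i = (\<lambda>w \<in> words d. act d i w)"

definition Gd :: "nat \<Rightarrow> (nat list \<Rightarrow> nat list) set" where
  "Gd d = generate (AutT d) (gen_a d ` {1..d})"

definition Gd' :: "nat \<Rightarrow> (nat list \<Rightarrow> nat list) set" where
  "Gd' d = derived (AutT d) (Gd d)"

definition stab1 :: "nat \<Rightarrow> (nat list \<Rightarrow> nat list) set \<Rightarrow> (nat list \<Rightarrow> nat list) set" where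
  "stab1 d H = {g \<in> H. \<forall>x \<in> {1..d}. g [x] = [x]}"

text \<open>psi_1(g) = (g|_1, ..., g|_d), tuples represented as functions on {1..d}.\<close>
definition psi1 :: "nat \<Rightarrow> (nat list \<Rightarrow> nat list) \<Rightarrow> (nat \<Rightarrow> (nat list \<Rightarrow> nat list))" where
  "psi1 d g = (\<lambda>x \<in> {1..d}. sect d g [x])"

definition spherically_transitive :: "nat \<Rightarrow> (nat list \<Rightarrow> nat list) set \<Rightarrow> bool" where
  "spherically_transitive d H \<longleftrightarrow>
     (\<forall>k. \<forall>u \<in> words d. \<forall>v \<in> words d.
        length u = k \<longrightarrow> length v = k \<longrightarrow> (\<exists>g \<in> H. g u = v))"

end

theory Submission
  imports Defs
begin


lemma words_Cons[simp]: "x # w \<in> words d \<longleftrightarrow> x \<in> {1..d} \<and> w \<in> words d"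
  by (auto simp: words_def)
lemma words_Nil[simp]: "[] \<in> words d" by (auto simp: words_def)
lemma words_append[simp]: "u @ v \<in> words d \<longleftrightarrow> u \<in> words d \<and> v \<in> words d"
  by (auto simp: words_def)

definition f1 :: "(nat list \<Rightarrow> nat list) \<Rightarrow> nat \<Rightarrow> nat" where
  "f1 g x = hd (g [x])"

lemma tree_autD:
  assumes "f \<in> tree_aut d"
  shows "bij_betw f (words d) (words d)" "f \<in> extensional (words d)"
    "\<And>u. u \<in> words d \<Longrightarrow> length (f u) = length u"
    "\<And>u v. u @ v \<in> words d \<Longrightarrow> take (length u) (f (u@v)) = f u"
  using assms by (auto simp: tree_aut_def Bij_def)

lemma tree_aut_words: "f \<in> tree_aut d \<Longrightarrow> u \<in> words d \<Longrightarrow> f u \<in> words d"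
  using tree_autD(1) bij_betwE by blast

lemma tree_aut_single:
  assumes "f \<in> tree_aut d" "x \<in> {1..d}"
  shows "f [x] = [f1 f x]" "f1 f x \<in> {1..d}"
proof -
  have w: "[x] \<in> words d" using assms by simp
  have "length (f [x]) = 1" using tree_autD(3)[OF assms(1) w] by simp
  then obtain y where y: "f [x] = [y]" by (cases "f [x]") auto
  then show "f [x] = [f1 f x]" by (simp add: f1_def)
  show "f1 f x \<in> {1..d}" using tree_aut_words[OF assms(1) w] y by (simp add: f1_def)
qed

lemma tree_aut_Cons:
  assumes "f \<in> tree_aut d" "x \<in> {1..d}" "w \<in> words d"
  shows "f (x # w) = f1 f x # sect d f [x] w"
proof -
  have "take 1 (f ([x] @ w)) = f [x]" using tree_autD(4)[OF assms(1), of "[x]" w] assms by simp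
  then have "take 1 (f (x#w)) = [f1 f x]" using tree_aut_single[OF assms(1,2)] by simp
  moreover have "sect d f [x] w = drop 1 (f (x#w))" using assms(3) by (simp add: sect_def)
  ultimately show ?thesis by (metis append_take_drop_id append_Cons append_Nil)
qed

lemma f1_inj:
  assumes "f \<in> tree_aut d" "x \<in> {1..d}" "y \<in> {1..d}" "f1 f x = f1 f y"
  shows "x = y"
proof -
  have "f [x] = f [y]" using tree_aut_single assms by metis
  moreover have "[x] \<in> words d" "[y] \<in> words d" using assms(2,3) by auto
  ultimately have "[x] = [y]" using tree_autD(1)[OF assms(1)] by (meson bij_betw_def inj_onD)
  then show ?thesis by simp
qed

lemma f1_surj:
  assumes "f \<in> tree_aut d" "y \<in> {1..d}"
  shows "\<exists>x\<in>{1..d}. f1 f x = y"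
proof -
  have "[y] \<in> words d" using assms by simp
  then obtain z where z: "z \<in> words d" "f z = [y]" using tree_autD(1)[OF assms(1)]
    by (metis bij_betw_iff_bijections)
  have "length z = 1" using tree_autD(3)[OF assms(1) z(1)] z(2) by simp
  then obtain x where "z = [x]" by (cases z) (auto simp: length_Suc_conv)
  then show ?thesis using z tree_aut_single[OF assms(1)] by auto
qed



lemma compose_tree_aut:
  assumes g: "g \<in> tree_aut d" and h: "h \<in> tree_aut d"
  shows "compose (words d) h g \<in> tree_aut d"
proof -
  have B: "compose (words d) h g \<in> Bij (words d)"
    using g h by (auto simp: tree_aut_def intro: compose_Bij)
  have L: "\<forall>u\<in>words d. length (compose (words d) h g u) = length u"
    using g h by (simp add: compose_eq tree_autD(3) tree_aut_words)
  have P: "take (length u) (compose (words d) h g (u @ v)) = compose (words d) h g u"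
    if uv: "u @ v \<in> words d" for u v
  proof -
    have u: "u \<in> words d" and v: "v \<in> words d" using uv by auto
    define r where "r = drop (length u) (g (u @ v))"
    have "g (u @ v) = g u @ r"
      unfolding r_def using tree_autD(4)[OF g uv] by (metis append_take_drop_id)
    moreover have "g u @ r \<in> words d" using calculation tree_aut_words[OF g uv] by simp
    ultimately have "take (length (g u)) (h (g (u @ v))) = h (g u)"
      using tree_autD(4)[OF h] by simp
    moreover have "length (g u) = length u" using tree_autD(3)[OF g u] .
    ultimately show ?thesis using uv u by (simp add: compose_eq)
  qed
  show ?thesis using B L P by (simp add: tree_aut_def)
qed

lemma id_tree_aut: "(\<lambda>x\<in>words d. x) \<in> tree_aut d"
  by (auto simp: tree_aut_def id_Bij)

lemma inv_tree_aut:
  assumes f: "f \<in> tree_aut d"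
  shows "(\<lambda>x\<in>words d. inv_into (words d) f x) \<in> tree_aut d"
proof -
  have bij: "bij_betw f (words d) (words d)" using tree_autD(1)[OF f] .
  have B: "(\<lambda>x\<in>words d. inv_into (words d) f x) \<in> Bij (words d)"
    using f by (auto simp: tree_aut_def intro: restrict_inv_into_Bij)
  have fi: "f (inv_into (words d) f w) = w" if "w \<in> words d" for w
    using bij that by (simp add: bij_betw_inv_into_right)
  have im: "inv_into (words d) f w \<in> words d" if "w \<in> words d" for w
    using bij that by (metis bij_betw_def inv_into_into)
  have L: "length (inv_into (words d) f w) = length w" if w: "w \<in> words d" for w
    using tree_autD(3)[OF f im[OF w]] fi[OF w] by simp
  have P: "take (length u) (inv_into (words d) f (u @ v)) = inv_into (words d) f u"
    if uv: "u @ v \<in> words d" for u v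
  proof -
    have u: "u \<in> words d" using uv by simp
    define w where "w = inv_into (words d) f (u @ v)"
    have w: "w \<in> words d" "f w = u @ v" using im[OF uv] fi[OF uv] by (auto simp: w_def)
    have lw: "length w = length u + length v" using L[OF uv] w_def by simp
    define w1 where "w1 = take (length u) w"
    have w1w: "w1 @ drop (length u) w = w" by (simp add: w1_def)
    have w1: "w1 \<in> words d" using w(1) w1w by (metis words_append)
    have "f w1 = take (length w1) (f (w1 @ drop (length u) w))"
      using tree_autD(4)[OF f] w(1) w1w by metis
    also have "... = u" using w1w w(2) lw by (simp add: w1_def)
    finally have "f w1 = u" .
    then have "inv_into (words d) f u = w1" using bij w1 by (metis bij_betw_def inv_into_f_f)
    then show ?thesis by (simp add: w1_def w_def)
  qed
  show ?thesis using B L P im by (auto simp: tree_aut_def)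
qed

lemma AutT_simps:
  "carrier (AutT d) = tree_aut d"
  "g \<otimes>\<^bsub>AutT d\<^esub> h = compose (words d) h g"
  "\<one>\<^bsub>AutT d\<^esub> = (\<lambda>x\<in>words d. x)"
  by (simp_all add: AutT_def)

lemma group_AutT: "group (AutT d)"
proof (rule groupI)
  fix x y z assume x: "x \<in> carrier (AutT d)" and y: "y \<in> carrier (AutT d)" and z: "z \<in> carrier (AutT d)"
  show "x \<otimes>\<^bsub>AutT d\<^esub> y \<in> carrier (AutT d)" using x y by (simp add: AutT_simps compose_tree_aut)
  have "x \<in> words d \<rightarrow> words d" "y \<in> words d \<rightarrow> words d" "z \<in> words d \<rightarrow> words d"
    using x y z tree_aut_words by (auto simp: AutT_simps)
  then show "x \<otimes>\<^bsub>AutT d\<^esub> y \<otimes>\<^bsub>AutT d\<^esub> z = x \<otimes>\<^bsub>AutT d\<^esub> (y \<otimes>\<^bsub>AutT d\<^esub> z)"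
    by (simp add: AutT_simps compose_assoc)
next
  show "\<one>\<^bsub>AutT d\<^esub> \<in> carrier (AutT d)" by (simp add: AutT_simps id_tree_aut)
next
  fix x assume x: "x \<in> carrier (AutT d)"
  then show "\<one>\<^bsub>AutT d\<^esub> \<otimes>\<^bsub>AutT d\<^esub> x = x"
    using tree_autD(2) tree_aut_words
    by (fastforce simp: AutT_simps compose_def fun_eq_iff extensional_def)
next
  fix x assume x: "x \<in> carrier (AutT d)"
  let ?y = "(\<lambda>w\<in>words d. inv_into (words d) x w)"
  have bij: "bij_betw x (words d) (words d)" using x tree_autD(1) by (simp add: AutT_simps)
  have "?y \<otimes>\<^bsub>AutT d\<^esub> x = \<one>\<^bsub>AutT d\<^esub>"
    using bij by (auto simp: AutT_simps compose_def fun_eq_iff bij_betw_inv_into_right)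
  then show "\<exists>y\<in>carrier (AutT d). y \<otimes>\<^bsub>AutT d\<^esub> x = \<one>\<^bsub>AutT d\<^esub>"
    using inv_tree_aut x by (metis AutT_simps(1))
qed



lemma carrier_AutT[simp]: "carrier (AutT d) = tree_aut d" by (simp add: AutT_def)

lemma sect_tree_aut:
  assumes g: "g \<in> tree_aut d" and x: "x \<in> {1..d}"
  shows "sect d g [x] \<in> tree_aut d"
proof -
  let ?s = "sect d g [x]"
  have s: "\<And>v. v \<in> words d \<Longrightarrow> ?s v = drop 1 (g (x # v))" by (simp add: sect_def)
  have C: "\<And>v. v \<in> words d \<Longrightarrow> g (x # v) = f1 g x # ?s v" using tree_aut_Cons[OF g x] by simp
  have W: "\<And>v. v \<in> words d \<Longrightarrow> ?s v \<in> words d"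
    using C tree_aut_words[OF g] x by (metis words_Cons)
  have L: "\<And>v. v \<in> words d \<Longrightarrow> length (?s v) = length v"
    using C tree_autD(3)[OF g] x by (metis Suc_inject length_Cons words_Cons)
  have inj: "inj_on ?s (words d)"
  proof (rule inj_onI)
    fix v w assume v: "v \<in> words d" and w: "w \<in> words d" and e: "?s v = ?s w"
    then have "g (x # v) = g (x # w)" using C by simp
    then show "v = w" using tree_autD(1)[OF g] v w x
      by (metis bij_betw_def inj_onD list.inject words_Cons)
  qed
  have sur: "?s ` words d = words d"
  proof
    show "?s ` words d \<subseteq> words d" using W by auto
    show "words d \<subseteq> ?s ` words d"
    proof
      fix w assume w: "w \<in> words d"
      have y: "f1 g x # w \<in> words d" using w tree_aut_single(2)[OF g x] by simp
      then obtain z where z: "z \<in> words d" "g z = f1 g x # w"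
        using tree_autD(1)[OF g] by (metis bij_betw_iff_bijections)
      have "length z = Suc (length w)" using tree_autD(3)[OF g z(1)] z(2) by simp
      then obtain x' v where zv: "z = x' # v" by (cases z) auto
      have x': "x' \<in> {1..d}" "v \<in> words d" using z(1) zv by auto
      then have "f1 g x' = f1 g x" using z(2) zv by (metis list.inject tree_aut_Cons[OF g x'(1) x'(2)])
      then have "x' = x" using f1_inj[OF g x'(1) x] by simp
      then have "?s v = w" using z(2) zv C[OF x'(2)] by simp
      then show "w \<in> ?s ` words d" using x'(2) by blast
    qed
  qed
  have P: "take (length u) (?s (u @ v)) = ?s u" if uv: "u @ v \<in> words d" for u v
  proof -
    have u: "u \<in> words d" using uv by simp
    have "take (length (x # u)) (g ((x # u) @ v)) = g (x # u)"
      using tree_autD(4)[OF g, of "x # u" v] uv x by simp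
    moreover have "take (length u) (drop 1 L) = drop 1 (take (Suc (length u)) L)" for L :: "nat list"
      by (simp add: drop_take)
    ultimately show ?thesis using s[OF uv] s[OF u] by simp
  qed
  have E: "?s \<in> extensional (words d)" by (simp add: sect_def)
  show ?thesis using inj sur P L E W
    by (auto simp: tree_aut_def Bij_def bij_betw_def)
qed

lemma f1_mult:
  assumes g: "g \<in> tree_aut d" and h: "h \<in> tree_aut d" and x: "x \<in> {1..d}"
  shows "f1 (g \<otimes>\<^bsub>AutT d\<^esub> h) x = f1 h (f1 g x)"
  using tree_aut_single[OF g x] x by (simp add: AutT_simps f1_def compose_eq)

lemma sect_mult:
  assumes g: "g \<in> tree_aut d" and h: "h \<in> tree_aut d" and x: "x \<in> {1..d}"
  shows "sect d (g \<otimes>\<^bsub>AutT d\<^esub> h) [x] = sect d g [x] \<otimes>\<^bsub>AutT d\<^esub> sect d h [f1 g x]"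
proof -
  have "sect d (compose (words d) h g) [x] v = compose (words d) (sect d h [f1 g x]) (sect d g [x]) v" for v
  proof (cases "v \<in> words d")
    case True
    have sv: "sect d g [x] v \<in> words d"
      using sect_tree_aut[OF g x] True tree_aut_words by blast
    have "g (x # v) = f1 g x # sect d g [x] v" using tree_aut_Cons[OF g x True] .
    then show ?thesis using True sv x by (simp add: sect_def compose_eq)
  next
    case False
    then show ?thesis by (simp add: sect_def compose_def)
  qed
  then show ?thesis by (simp add: AutT_simps fun_eq_iff)
qed

lemma f1_one: "x \<in> {1..d} \<Longrightarrow> f1 (\<one>\<^bsub>AutT d\<^esub>) x = x"
  by (simp add: AutT_simps f1_def)

lemma sect_one: "x \<in> {1..d} \<Longrightarrow> sect d (\<one>\<^bsub>AutT d\<^esub>) [x] = \<one>\<^bsub>AutT d\<^esub>"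
  by (simp add: AutT_simps sect_def fun_eq_iff)

locale tree =
  fixes d :: nat
  assumes d3: "3 \<le> d"
begin

sublocale A: group "AutT d" by (rule group_AutT)

abbreviation mm (infixl "\<cdot>" 70) where "g \<cdot> h \<equiv> g \<otimes>\<^bsub>AutT d\<^esub> h"
abbreviation ii ("\<iota>") where "\<iota> g \<equiv> inv\<^bsub>AutT d\<^esub> g"
abbreviation ee ("\<e>") where "\<e> \<equiv> \<one>\<^bsub>AutT d\<^esub>"
abbreviation sc (infixl "\<down>" 90) where "g \<down> x \<equiv> sect d g [x]"

lemma f1_inv:
  assumes g: "g \<in> tree_aut d" and x: "x \<in> {1..d}"
  shows "f1 (\<iota> g) (f1 g x) = x" "(\<iota> g)\<down>(f1 g x) = \<iota> (g\<down>x)"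
proof -
  have gi: "\<iota> g \<in> tree_aut d" using g by (metis A.inv_closed carrier_AutT)
  have gg: "g \<cdot> \<iota> g = \<e>" using g by (metis A.r_inv carrier_AutT)
  have "f1 (g \<cdot> \<iota> g) x = x" using gg f1_one[OF x] by simp
  then show "f1 (\<iota> g) (f1 g x) = x" using f1_mult[OF g gi x] by simp
  have "(g\<down>x) \<cdot> ((\<iota> g)\<down>(f1 g x)) = \<e>" using sect_mult[OF g gi x] gg sect_one[OF x] by simp
  then show "(\<iota> g)\<down>(f1 g x) = \<iota> (g\<down>x)"
    using sect_tree_aut g gi x tree_aut_single(2)
    by (metis A.inv_equality A.l_inv A.m_assoc A.r_inv carrier_AutT A.inv_closed A.l_one)
qed

end


context tree begin

lemma nxt_range: "i \<in> {1..d} \<Longrightarrow> nxt d i \<in> {1..d}"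
  using d3 by (auto simp: nxt_def) (meson Suc_leI mod_less_divisor not_le not_less_eq_eq order.trans zero_less_iff_neq_zero less_le_trans)

lemma nxt_neq: "i \<in> {1..d} \<Longrightarrow> nxt d i \<noteq> i"
  using d3 by (cases "i = d") (auto simp: nxt_def)

lemma act_words: "i \<in> {1..d} \<Longrightarrow> w \<in> words d \<Longrightarrow> act d i w \<in> words d"
proof (induction w arbitrary: i)
  case Nil then show ?case by simp
next
  case (Cons x w) then show ?case using nxt_range by auto
qed

lemma act_length: "length (act d i w) = length w"
  by (induction w arbitrary: i) auto

lemma act_prefix: "take (length u) (act d i (u @ v)) = act d i u"
  by (induction u arbitrary: i) auto

lemma act_inj: "i \<in> {1..d} \<Longrightarrow> v \<in> words d \<Longrightarrow> w \<in> words d \<Longrightarrow> act d i v = act d i w \<Longrightarrow> v = w"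
proof (induction v arbitrary: i w)
  case Nil then show ?case by (cases w) (auto split: if_splits)
next
  case (Cons x v)
  then obtain y w' where w: "w = y # w'" by (cases w) (auto split: if_splits)
  have ni: "nxt d i \<noteq> i" using nxt_neq Cons.prems(1) .
  have nr: "nxt d i \<in> {1..d}" using nxt_range Cons.prems(1) .
  show ?case using Cons.prems Cons.IH[of i w'] Cons.IH[of "nxt d i" w'] ni nr w
    by (auto split: if_splits)
qed

lemma act_surj: "i \<in> {1..d} \<Longrightarrow> w \<in> words d \<Longrightarrow> \<exists>v\<in>words d. act d i v = w"
proof (induction w arbitrary: i)
  case Nil then show ?case by (intro bexI[of _ "[]"]) auto
next
  case (Cons y w)
  have ni: "nxt d i \<noteq> i" using nxt_neq Cons.prems(1) .
  have nr: "nxt d i \<in> {1..d}" using nxt_range Cons.prems(1) .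
  have y: "y \<in> {1..d}" and w: "w \<in> words d" using Cons.prems by auto
  show ?case
  proof (cases "y = nxt d i")
    case True
    obtain v where "v \<in> words d" "act d i v = w" using Cons.IH[OF Cons.prems(1) w] by blast
    then show ?thesis using True Cons.prems(1) ni by (intro bexI[of _ "i # v"]) auto
  next
    case F1: False
    show ?thesis
    proof (cases "y = i")
      case True
      obtain v where "v \<in> words d" "act d (nxt d i) v = w" using Cons.IH[OF nr w] by blast
      then show ?thesis using True nr ni by (intro bexI[of _ "nxt d i # v"]) auto
    next
      case False
      then show ?thesis using F1 y w by (intro bexI[of _ "y # w"]) auto
    qed
  qed
qed

lemma gen_a_tree_aut: assumes i: "i \<in> {1..d}" shows "gen_a d i \<in> tree_aut d"
proof -
  have "bij_betw (act d i) (words d) (words d)"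
    unfolding bij_betw_def inj_on_def
  proof (intro conjI ballI impI equalityI subsetI)
    show "\<And>x y. x \<in> words d \<Longrightarrow> y \<in> words d \<Longrightarrow> act d i x = act d i y \<Longrightarrow> x = y"
      using act_inj[OF i] by blast
    show "\<And>y. y \<in> act d i ` words d \<Longrightarrow> y \<in> words d" using act_words[OF i] by auto
    show "\<And>y. y \<in> words d \<Longrightarrow> y \<in> act d i ` words d" using act_surj[OF i] by blast
  qed
  then have "bij_betw (gen_a d i) (words d) (words d)"
    unfolding gen_a_def by (rule bij_betw_cong[THEN iffD1, rotated]) simp
  then show ?thesis
    unfolding tree_aut_def Bij_def by (auto simp: gen_a_def act_length act_prefix)
qed

lemma f1_gen: "i \<in> {1..d} \<Longrightarrow> x \<in> {1..d} \<Longrightarrow>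
   f1 (gen_a d i) x = (if x = i then nxt d i else if x = nxt d i then i else x)"
  by (auto simp: f1_def gen_a_def)

lemma sect_gen: "i \<in> {1..d} \<Longrightarrow> x \<in> {1..d} \<Longrightarrow>
   (gen_a d i)\<down>x = (if x = i then gen_a d i else if x = nxt d i then gen_a d (nxt d i) else \<e>)"
  by (auto simp: sect_def gen_a_def AutT_simps fun_eq_iff)

end


context tree begin

abbreviation "GG \<equiv> Gd d"
abbreviation "a \<equiv> gen_a d"

lemma gens_sub: "gen_a d ` {1..d} \<subseteq> carrier (AutT d)"
  using gen_a_tree_aut by auto

lemma G_sub: "subgroup GG (AutT d)"
  unfolding Gd_def by (rule A.generate_is_subgroup[OF gens_sub])

lemma G_car: "g \<in> GG \<Longrightarrow> g \<in> tree_aut d"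
  using subgroup.subset[OF G_sub] by auto

lemma a_G: "i \<in> {1..d} \<Longrightarrow> a i \<in> GG"
  unfolding Gd_def by (rule generate.incl) auto

lemma G_one: "\<e> \<in> GG" using subgroup.one_closed[OF G_sub] .
lemma G_mult: "g \<in> GG \<Longrightarrow> h \<in> GG \<Longrightarrow> g \<cdot> h \<in> GG" using subgroup.m_closed[OF G_sub] .
lemma G_inv: "g \<in> GG \<Longrightarrow> \<iota> g \<in> GG" using subgroup.m_inv_closed[OF G_sub] .

lemma f1_range: "g \<in> tree_aut d \<Longrightarrow> x \<in> {1..d} \<Longrightarrow> f1 g x \<in> {1..d}"
  using tree_aut_single(2) .

lemma sect_G: assumes "g \<in> GG" "x \<in> {1..d}" shows "g\<down>x \<in> GG"
  using assms(1,2) unfolding Gd_def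
proof (induction arbitrary: x rule: generate.induct)
  case one then show ?case using sect_one G_one Gd_def by metis
next
  case (incl h)
  then obtain i where i: "i \<in> {1..d}" "h = a i" by auto
  then show ?case using sect_gen[OF i(1) incl(2)] a_G nxt_range G_one Gd_def by auto
next
  case (inv h x)
  then obtain i where i: "i \<in> {1..d}" "h = a i" by auto
  have h: "h \<in> tree_aut d" using i gen_a_tree_aut by simp
  obtain y where y: "y \<in> {1..d}" "f1 h y = x" using f1_surj[OF h inv(2)] by blast
  have "(\<iota> h)\<down>x = \<iota> (h\<down>y)" using f1_inv(2)[OF h y(1)] y(2) by simp
  moreover have "h\<down>y \<in> GG" using sect_gen[OF i(1) y(1)] i a_G nxt_range G_one by auto
  ultimately show ?case using G_inv Gd_def by metis
next
  case (eng h1 h2 x)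
  have h1: "h1 \<in> tree_aut d" and h2: "h2 \<in> tree_aut d" using eng(1,2) G_car Gd_def by auto
  have "(h1 \<cdot> h2)\<down>x = h1\<down>x \<cdot> h2\<down>(f1 h1 x)" using sect_mult[OF h1 h2 eng(5)] .
  then show ?case using eng f1_range[OF h1 eng(5)] G_mult Gd_def by metis
qed

lemma nxt_lt: "i < d \<Longrightarrow> nxt d i = Suc i" by (simp add: nxt_def)
lemma nxt_d: "nxt d d = 1" by (simp add: nxt_def)

primrec P :: "nat \<Rightarrow> nat list \<Rightarrow> nat list" where
  "P 0 = \<e>"
| "P (Suc k) = P k \<cdot> a (Suc k)"

lemma P_G: "k \<le> d \<Longrightarrow> P k \<in> GG"
  by (induction k) (auto simp: G_one G_mult a_G)

lemma P_car: "k \<le> d \<Longrightarrow> P k \<in> tree_aut d"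
  using P_G G_car by blast

lemma P_act: "k < d \<Longrightarrow> f1 (P k) 1 = Suc k \<and> (P k)\<down>1 = P k"
proof (induction k)
  case 0 then show ?case using d3 by (simp add: f1_one sect_one)
next
  case (Suc k)
  have k: "k < d" using Suc.prems by simp
  have Pk: "P k \<in> tree_aut d" using P_car k by simp
  have ak: "a (Suc k) \<in> tree_aut d" using gen_a_tree_aut Suc.prems by simp
  have one: "(1::nat) \<in> {1..d}" using d3 by simp
  have sk: "Suc k \<in> {1..d}" using Suc.prems by simp
  have "f1 (P (Suc k)) 1 = f1 (a (Suc k)) (Suc k)"
    using f1_mult[OF Pk ak one] Suc.IH[OF k] by simp
  also have "... = Suc (Suc k)" using f1_gen[OF sk sk] nxt_lt Suc.prems by simp
  finally have 1: "f1 (P (Suc k)) 1 = Suc (Suc k)" .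
  have "(P (Suc k))\<down>1 = P k \<cdot> (a (Suc k))\<down>(Suc k)"
    using sect_mult[OF Pk ak one] Suc.IH[OF k] by simp
  also have "... = P (Suc k)" using sect_gen[OF sk sk] by simp
  finally show ?case using 1 by simp
qed

end


context tree begin

definition SS where "SS = {h. \<exists>s\<in>GG. f1 s 1 = 1 \<and> s\<down>1 = h}"

lemma one_in: "(1::nat) \<in> {1..d}" using d3 by simp

lemma SS_one: "\<e> \<in> SS"
  unfolding SS_def using G_one f1_one[OF one_in] sect_one[OF one_in] by blast

lemma SS_mult: assumes "h \<in> SS" "h' \<in> SS" shows "h \<cdot> h' \<in> SS"
proof -
  obtain s where s: "s \<in> GG" "f1 s 1 = 1" "s\<down>1 = h" using assms(1) SS_def by auto
  obtain t where t: "t \<in> GG" "f1 t 1 = 1" "t\<down>1 = h'" using assms(2) SS_def by auto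
  have "f1 (s \<cdot> t) 1 = 1" "(s \<cdot> t)\<down>1 = h \<cdot> h'"
    using f1_mult[OF G_car[OF s(1)] G_car[OF t(1)] one_in] sect_mult[OF G_car[OF s(1)] G_car[OF t(1)] one_in] s t
    by auto
  then show ?thesis unfolding SS_def using G_mult[OF s(1) t(1)] by blast
qed

lemma SS_inv: assumes "h \<in> SS" shows "\<iota> h \<in> SS"
proof -
  obtain s where s: "s \<in> GG" "f1 s 1 = 1" "s\<down>1 = h" using assms(1) SS_def by auto
  have "f1 (\<iota> s) 1 = 1" "(\<iota> s)\<down>1 = \<iota> h"
    using f1_inv[OF G_car[OF s(1)] one_in] s by auto
  then show ?thesis unfolding SS_def using G_inv[OF s(1)] by blast
qed

lemma SS_sigma: assumes i: "1 \<le> i" "i < d" shows "P (Suc i) \<cdot> \<iota> (P (i - 1)) \<in> SS"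
proof -
  have Pi: "P i \<in> GG" and Pj: "P (i - 1) \<in> GG" using P_G i by auto
  have ai: "a i \<in> GG" using a_G i by auto
  have iI: "i \<in> {1..d}" "Suc i \<in> {1..d}" using i by auto
  have c: "P i \<in> tree_aut d" "a i \<in> tree_aut d" "\<iota> (P (i - 1)) \<in> tree_aut d" "P i \<cdot> a i \<in> tree_aut d"
    using Pi Pj ai G_car G_inv G_mult by auto
  have A1: "f1 (P i) 1 = Suc i" "(P i)\<down>1 = P i" using P_act i by auto
  have A2: "f1 (P (i - 1)) 1 = i" "(P (i - 1))\<down>1 = P (i - 1)" using P_act[of "i - 1"] i by auto
  have N: "nxt d i = Suc i" using nxt_lt i by simp
  have B1: "f1 (a i) (Suc i) = i" "(a i)\<down>(Suc i) = a (Suc i)"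
    using f1_gen[OF iI(1) iI(2)] sect_gen[OF iI(1) iI(2)] N by auto
  have I1: "f1 (\<iota> (P (i - 1))) i = 1" "(\<iota> (P (i - 1)))\<down>i = \<iota> (P (i - 1))"
    using f1_inv[OF G_car[OF Pj] one_in] A2 by auto
  let ?s = "P i \<cdot> a i \<cdot> \<iota> (P (i - 1))"
  have f: "f1 (P i \<cdot> a i) 1 = i" using f1_mult[OF c(1) c(2) one_in] A1 B1 by simp
  have "f1 ?s 1 = 1" using f1_mult[OF c(4) c(3) one_in] f I1 by simp
  moreover have "?s\<down>1 = P (Suc i) \<cdot> \<iota> (P (i - 1))"
    using sect_mult[OF c(4) c(3) one_in] sect_mult[OF c(1) c(2) one_in] f A1 B1 I1 by simp
  moreover have "?s \<in> GG" using Pi ai Pj G_mult G_inv by auto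
  ultimately show ?thesis unfolding SS_def by blast
qed

lemma SS_rho: "a 1 \<cdot> \<iota> (P (d - 1)) \<in> SS"
proof -
  have Pj: "P (d - 1) \<in> GG" using P_G by auto
  have dI: "d \<in> {1..d}" using d3 by auto
  have ad: "a d \<in> GG" using a_G dI by auto
  have c: "a d \<in> tree_aut d" "\<iota> (P (d - 1)) \<in> tree_aut d"
    using Pj ad G_car G_inv by auto
  have A2: "f1 (P (d - 1)) 1 = d" "(P (d - 1))\<down>1 = P (d - 1)" using P_act[of "d - 1"] d3 by auto
  have B1: "f1 (a d) 1 = d" "(a d)\<down>1 = a 1"
    using f1_gen[OF dI one_in] sect_gen[OF dI one_in] nxt_d d3 by auto
  have I1: "f1 (\<iota> (P (d - 1))) d = 1" "(\<iota> (P (d - 1)))\<down>d = \<iota> (P (d - 1))"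
    using f1_inv[OF G_car[OF Pj] one_in] A2 by auto
  let ?s = "a d \<cdot> \<iota> (P (d - 1))"
  have "f1 ?s 1 = 1" using f1_mult[OF c(1) c(2) one_in] B1 I1 by simp
  moreover have "?s\<down>1 = a 1 \<cdot> \<iota> (P (d - 1))"
    using sect_mult[OF c(1) c(2) one_in] B1 I1 by simp
  moreover have "?s \<in> GG" using ad Pj G_mult G_inv by auto
  ultimately show ?thesis unfolding SS_def by blast
qed

end


locale tree_odd = tree +
  assumes oddd: "odd d"
begin

lemma SS_sub: "x \<in> SS \<Longrightarrow> x \<in> tree_aut d"
  unfolding SS_def using sect_tree_aut G_car one_in by auto

lemma cancel_r: "x \<in> tree_aut d \<Longrightarrow> y \<in> tree_aut d \<Longrightarrow> x \<cdot> \<iota> y \<cdot> y = x"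
  by (metis A.inv_closed A.l_inv A.m_assoc A.r_one carrier_AutT)

lemma P_even: "2 * m \<le> d - 1 \<Longrightarrow> P (2 * m) \<in> SS"
proof (induction m)
  case 0 then show ?case using SS_one by simp
next
  case (Suc m)
  have 1: "P (Suc (2*m+1)) \<cdot> \<iota> (P (2*m+1 - 1)) \<in> SS" using SS_sigma[of "2*m+1"] Suc.prems by auto
  have 2: "P (2*m) \<in> SS" using Suc by auto
  have "P (Suc (2*m+1)) \<cdot> \<iota> (P (2*m)) \<cdot> P (2*m) \<in> SS" using SS_mult[OF _ 2] 1 by simp
  then show ?case using cancel_r[OF P_car P_car, of "Suc (2*m+1)" "2*m"] Suc.prems
    by (simp add: mult_2)
qed

lemma P_dm1: "P (d - 1) \<in> SS"
proof -
  have "d - 1 = 2 * ((d - 1) div 2)" using oddd d3 by (simp add: odd_two_times_div_two_nat)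
  then show ?thesis using P_even[of "(d - 1) div 2"] by simp
qed

lemma a1_SS: "a 1 \<in> SS"
  using SS_mult[OF SS_rho P_dm1] cancel_r[OF gen_a_tree_aut[OF one_in] P_car[of "d - 1"]] by simp

lemma P_odd: "2 * m + 1 \<le> d \<Longrightarrow> P (2 * m + 1) \<in> SS"
proof (induction m)
  case 0 then show ?case using a1_SS gen_a_tree_aut[OF one_in] by simp
next
  case (Suc m)
  have 1: "P (Suc (2*m+2)) \<cdot> \<iota> (P (2*m+2 - 1)) \<in> SS" using SS_sigma[of "2*m+2"] Suc.prems by auto
  have 2: "P (2*m+1) \<in> SS" using Suc by auto
  have "P (Suc (2*m+2)) \<cdot> \<iota> (P (2*m+1)) \<cdot> P (2*m+1) \<in> SS" using SS_mult[OF _ 2] 1 by simp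
  then show ?case using cancel_r[OF P_car P_car, of "Suc (2*m+2)" "2*m+1"] Suc.prems
    by (simp add: mult_2)
qed

lemma P_SS: "k \<le> d \<Longrightarrow> P k \<in> SS"
proof (cases "even k")
  case True
  then obtain m where "k = 2 * m" by blast
  moreover assume "k \<le> d"
  ultimately show ?thesis using P_even oddd by (cases "k = d") auto
next
  case False
  then obtain m where "k = 2 * m + 1" using oddE by blast
  moreover assume "k \<le> d"
  ultimately show ?thesis using P_odd by auto
qed

lemma a_SS: assumes k: "k \<in> {1..d}" shows "a k \<in> SS"
proof -
  obtain j where j: "k = Suc j" using k by (cases k) auto
  have "\<iota> (P j) \<cdot> P (Suc j) = a k"
    using j P_car[of j] gen_a_tree_aut[OF k] k
    by simp (metis A.inv_closed A.l_inv A.m_assoc A.l_one carrier_AutT)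
  then show ?thesis using SS_mult[OF SS_inv[OF P_SS] P_SS, of j "Suc j"] j k by auto
qed

lemma G_SS: "g \<in> GG \<Longrightarrow> g \<in> SS"
  unfolding Gd_def
proof (induction rule: generate.induct)
  case one then show ?case using SS_one by simp
next
  case (incl h) then show ?case using a_SS by auto
next
  case (inv h) then show ?case using a_SS SS_inv by auto
next
  case (eng h1 h2) then show ?case using SS_mult by auto
qed

lemma fractal: "h \<in> GG \<Longrightarrow> \<exists>s\<in>GG. f1 s 1 = 1 \<and> s\<down>1 = h"
  using G_SS SS_def by auto

end


context tree begin

lemma app_mult: "u \<in> words d \<Longrightarrow> (g \<cdot> h) u = h (g u)"
  by (simp add: AutT_simps compose_eq)

lemma app_one: "u \<in> words d \<Longrightarrow> \<e> u = u"
  by (simp add: AutT_simps)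

lemma app_inv: assumes g: "g \<in> tree_aut d" and u: "u \<in> words d" shows "g ((\<iota> g) u) = u"
proof -
  have "g ((\<iota> g) u) = (\<iota> g \<cdot> g) u" using app_mult[OF u] by simp
  moreover have "\<iota> g \<cdot> g = \<e>" using g by (metis A.l_inv carrier_AutT)
  then have "(\<iota> g \<cdot> g) u = u" using app_one[OF u] by simp
  ultimately show ?thesis by simp
qed

lemma inv_car: "g \<in> tree_aut d \<Longrightarrow> \<iota> g \<in> tree_aut d"
  by (metis A.inv_closed carrier_AutT)

lemma level1_trans: "x \<in> {1..d} \<Longrightarrow> \<exists>t\<in>GG. f1 t 1 = x"
  using P_act[of "x - 1"] P_G[of "x - 1"] by (intro bexI[of _ "P (x - 1)"]) auto

end

context tree_odd begin

lemma sph_level: "\<forall>u\<in>words d. \<forall>v\<in>words d. length u = k \<longrightarrow> length v = k \<longrightarrow> (\<exists>g\<in>GG. g u = v)"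
proof (induction k)
  case 0 then show ?case using G_one app_one[OF words_Nil] by auto
next
  case (Suc k)
  show ?case
  proof (intro ballI impI)
    fix u v assume u: "u \<in> words d" and v: "v \<in> words d" and lu: "length u = Suc k" and lv: "length v = Suc k"
    obtain x u' where xu: "u = x # u'" using lu by (cases u) auto
    obtain y v' where yv: "v = y # v'" using lv by (cases v) auto
    have x: "x \<in> {1..d}" "u' \<in> words d" using u xu by auto
    have y: "y \<in> {1..d}" "v' \<in> words d" using v yv by auto
    obtain tx where tx: "tx \<in> GG" "f1 tx 1 = x" using level1_trans[OF x(1)] by blast
    obtain ty where ty: "ty \<in> GG" "f1 ty 1 = y" using level1_trans[OF y(1)] by blast
    have txc: "\<iota> tx \<in> tree_aut d" and tyc: "\<iota> ty \<in> tree_aut d" using tx ty G_car inv_car by auto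
    have ix: "f1 (\<iota> tx) x = 1" using f1_inv(1)[OF G_car[OF tx(1)] one_in] tx by simp
    have iy: "f1 (\<iota> ty) y = 1" using f1_inv(1)[OF G_car[OF ty(1)] one_in] ty by simp
    define w1 where "w1 = ((\<iota> tx)\<down>x) u'"
    define w2 where "w2 = ((\<iota> ty)\<down>y) v'"
    have U: "(\<iota> tx) u = 1 # w1" using tree_aut_Cons[OF txc x] xu ix w1_def by simp
    have V: "(\<iota> ty) v = 1 # w2" using tree_aut_Cons[OF tyc y] yv iy w2_def by simp
    have w1: "w1 \<in> words d" "length w1 = k"
      using tree_aut_words[OF sect_tree_aut[OF txc x(1)] x(2)] tree_autD(3)[OF sect_tree_aut[OF txc x(1)] x(2)] lu xu
      unfolding w1_def by auto
    have w2: "w2 \<in> words d" "length w2 = k"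
      using tree_aut_words[OF sect_tree_aut[OF tyc y(1)] y(2)] tree_autD(3)[OF sect_tree_aut[OF tyc y(1)] y(2)] lv yv
      unfolding w2_def by auto
    obtain h where h: "h \<in> GG" "h w1 = w2" using Suc.IH w1 w2 by blast
    obtain s where s: "s \<in> GG" "f1 s 1 = 1" "s\<down>1 = h" using fractal[OF h(1)] by blast
    have S: "s (1 # w1) = 1 # w2" using tree_aut_Cons[OF G_car[OF s(1)] one_in w1(1)] s h by simp
    have "(\<iota> tx \<cdot> s \<cdot> ty) u = ty ((\<iota> tx \<cdot> s) u)" using app_mult[OF u] by simp
    also have "... = ty (s ((\<iota> tx) u))" using app_mult[OF u] by simp
    also have "... = ty ((\<iota> ty) v)" using U S V by simp
    also have "... = v" using app_inv[OF G_car[OF ty(1)] v] .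
    finally have "(\<iota> tx \<cdot> s \<cdot> ty) u = v" .
    moreover have "\<iota> tx \<cdot> s \<cdot> ty \<in> GG" using G_mult[OF G_mult[OF G_inv[OF tx(1)] s(1)] ty(1)] .
    ultimately show "\<exists>g\<in>GG. g u = v" by blast
  qed
qed

lemma sph: "spherically_transitive d GG"
  unfolding spherically_transitive_def using sph_level by blast

end


context tree begin

abbreviation "DG \<equiv> Gd' d"

definition st :: "(nat list \<Rightarrow> nat list) \<Rightarrow> bool" where
  "st g \<longleftrightarrow> g \<in> tree_aut d \<and> (\<forall>z\<in>{1..d}. f1 g z = z)"

lemma DG_sub_G: "DG \<subseteq> GG"
  unfolding Gd'_def using A.derived_incl[OF order_refl G_sub] .

lemma DG_subgroup: "subgroup DG (AutT d)"
  unfolding Gd'_def using A.derived_is_subgroup subgroup.subset[OF G_sub] by blast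

lemma DG_one: "\<e> \<in> DG" using subgroup.one_closed[OF DG_subgroup] .
lemma DG_mult: "g \<in> DG \<Longrightarrow> h \<in> DG \<Longrightarrow> g \<cdot> h \<in> DG" using subgroup.m_closed[OF DG_subgroup] .
lemma DG_inv: "g \<in> DG \<Longrightarrow> \<iota> g \<in> DG" using subgroup.m_inv_closed[OF DG_subgroup] .

lemma comm_DG: "g \<in> GG \<Longrightarrow> h \<in> GG \<Longrightarrow> g \<cdot> h \<cdot> \<iota> g \<cdot> \<iota> h \<in> DG"
  unfolding Gd'_def derived_def by (rule generate.incl) blast

lemma comm_DG': "g \<in> GG \<Longrightarrow> h \<in> GG \<Longrightarrow> \<iota> g \<cdot> \<iota> h \<cdot> g \<cdot> h \<in> DG"
  using comm_DG[OF G_inv G_inv] G_car by (metis A.inv_inv carrier_AutT)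

lemma DG_normal: assumes g: "g \<in> GG" and x: "x \<in> DG" shows "g \<cdot> x \<cdot> \<iota> g \<in> DG"
proof -
  have N: "normal DG (AutT d\<lparr>carrier := GG\<rparr>)"
    unfolding Gd'_def using A.derived_subgroup_is_normal[OF G_sub] .
  then have "g \<otimes>\<^bsub>AutT d\<lparr>carrier := GG\<rparr>\<^esub> x \<otimes>\<^bsub>AutT d\<lparr>carrier := GG\<rparr>\<^esub> inv\<^bsub>AutT d\<lparr>carrier := GG\<rparr>\<^esub> g \<in> DG"
    using normal.inv_op_closed2[OF N, of g x] g x by simp
  then show ?thesis using A.m_inv_consistent[OF G_sub g] by simp
qed

lemma DG_normal': assumes g: "g \<in> GG" and x: "x \<in> DG" shows "\<iota> g \<cdot> x \<cdot> g \<in> DG"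
  using DG_normal[OF G_inv[OF g] x] G_car[OF g] by (metis A.inv_inv carrier_AutT)

lemma st_one: "st \<e>"
  unfolding st_def using f1_one id_tree_aut by (auto simp: AutT_simps)

lemma st_mult: assumes "st g" "st h" shows "st (g \<cdot> h)" "z \<in> {1..d} \<Longrightarrow> (g \<cdot> h)\<down>z = g\<down>z \<cdot> h\<down>z"
  using assms f1_mult sect_mult unfolding st_def by (auto simp: A.m_closed[simplified])

lemma st_inv: assumes "st g" shows "st (\<iota> g)" "z \<in> {1..d} \<Longrightarrow> (\<iota> g)\<down>z = \<iota> (g\<down>z)"
  using assms f1_inv inv_car unfolding st_def by metis+

lemma f1_bij: "s \<in> tree_aut d \<Longrightarrow> x \<in> {1..d} \<Longrightarrow> y \<in> {1..d} \<Longrightarrow> f1 s x = f1 s y \<longleftrightarrow> x = y"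
  using f1_inj by blast

lemma conj_st:
  assumes g: "st g" and s: "s \<in> tree_aut d"
  shows "st (\<iota> s \<cdot> g \<cdot> s)"
    "x \<in> {1..d} \<Longrightarrow> (\<iota> s \<cdot> g \<cdot> s)\<down>(f1 s x) = \<iota> (s\<down>x) \<cdot> g\<down>x \<cdot> s\<down>x"
proof -
  have gc: "g \<in> tree_aut d" using g st_def by auto
  have si: "\<iota> s \<in> tree_aut d" using inv_car[OF s] .
  have sg: "\<iota> s \<cdot> g \<in> tree_aut d" using si gc by (metis A.m_closed carrier_AutT)
  have main: "f1 (\<iota> s \<cdot> g \<cdot> s) (f1 s x) = f1 s x \<and> (\<iota> s \<cdot> g \<cdot> s)\<down>(f1 s x) = \<iota> (s\<down>x) \<cdot> g\<down>x \<cdot> s\<down>x"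
    if x: "x \<in> {1..d}" for x
  proof -
    have y: "f1 s x \<in> {1..d}" using f1_range[OF s x] .
    have i1: "f1 (\<iota> s) (f1 s x) = x" "(\<iota> s)\<down>(f1 s x) = \<iota> (s\<down>x)" using f1_inv[OF s x] by auto
    have gx: "f1 g x = x" using g x st_def by auto
    have f: "f1 (\<iota> s \<cdot> g) (f1 s x) = x" using f1_mult[OF si gc y] i1 gx by simp
    show ?thesis
      using f1_mult[OF sg s y] sect_mult[OF sg s y] sect_mult[OF si gc y] f i1 by simp
  qed
  show "x \<in> {1..d} \<Longrightarrow> (\<iota> s \<cdot> g \<cdot> s)\<down>(f1 s x) = \<iota> (s\<down>x) \<cdot> g\<down>x \<cdot> s\<down>x" using main by blast
  have "\<forall>z\<in>{1..d}. f1 (\<iota> s \<cdot> g \<cdot> s) z = z"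
  proof
    fix z assume z: "z \<in> {1..d}"
    obtain x where "x \<in> {1..d}" "f1 s x = z" using f1_surj[OF s z] by blast
    then show "f1 (\<iota> s \<cdot> g \<cdot> s) z = z" using main by blast
  qed
  moreover have "\<iota> s \<cdot> g \<cdot> s \<in> tree_aut d" using sg s by (metis A.m_closed carrier_AutT)
  ultimately show "st (\<iota> s \<cdot> g \<cdot> s)" unfolding st_def by blast
qed

end


context tree begin

lemma e_car: "\<e> \<in> tree_aut d" using id_tree_aut by (simp add: AutT_simps)

lemma l_one': "x \<in> tree_aut d \<Longrightarrow> \<e> \<cdot> x = x" by (metis A.l_one carrier_AutT)
lemma r_one': "x \<in> tree_aut d \<Longrightarrow> x \<cdot> \<e> = x" by (metis A.r_one carrier_AutT)
lemma inv_one': "\<iota> \<e> = \<e>" by (metis A.inv_one)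
lemma conj_e: "x \<in> tree_aut d \<Longrightarrow> \<iota> x \<cdot> \<e> \<cdot> x = \<e>"
  by (metis A.l_inv A.r_one carrier_AutT inv_car)

primrec Q :: "nat \<Rightarrow> nat \<Rightarrow> nat list \<Rightarrow> nat list" where
  "Q k 0 = \<e>"
| "Q k (Suc j) = Q k j \<cdot> a (k + j)"

lemma Q_act: "2 \<le> k \<Longrightarrow> k + j \<le> d \<Longrightarrow>
   Q k j \<in> GG \<and> f1 (Q k j) 1 = 1 \<and> (Q k j)\<down>1 = \<e> \<and> f1 (Q k j) k = k + j"
proof (induction j)
  case 0 then show ?case using G_one f1_one sect_one one_in by auto
next
  case (Suc j)
  let ?i = "k + j"
  have IH: "Q k j \<in> GG" "f1 (Q k j) 1 = 1" "(Q k j)\<down>1 = \<e>" "f1 (Q k j) k = k + j"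
    using Suc by auto
  have iI: "?i \<in> {1..d}" using Suc.prems by auto
  have ai: "a ?i \<in> GG" using a_G iI by blast
  have nx: "nxt d ?i = Suc ?i" using nxt_lt Suc.prems by simp
  have kI: "k \<in> {1..d}" using Suc.prems by auto
  have Qc: "Q k j \<in> tree_aut d" "a ?i \<in> tree_aut d" using IH ai G_car by auto
  have f11: "f1 (a ?i) 1 = 1" "(a ?i)\<down>1 = \<e>"
    using f1_gen[OF iI one_in] sect_gen[OF iI one_in] nx Suc.prems by auto
  have f1i: "f1 (a ?i) ?i = Suc ?i" using f1_gen[OF iI iI] nx by simp
  show ?case
    using f1_mult[OF Qc one_in] sect_mult[OF Qc one_in] f1_mult[OF Qc kI] IH f11 f1i
      G_mult[OF IH(1) ai] l_one'[OF e_car] by simp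
qed

lemma mover: assumes k: "k \<in> {2..d}" and k': "k' \<in> {2..d}"
  shows "\<exists>r\<in>GG. f1 r 1 = 1 \<and> r\<down>1 = \<e> \<and> f1 r k = k'"
proof (cases "k \<le> k'")
  case True
  then show ?thesis using Q_act[of k "k' - k"] k k' by auto
next
  case False
  have Q: "Q k' (k - k') \<in> GG" "f1 (Q k' (k - k')) 1 = 1" "(Q k' (k - k'))\<down>1 = \<e>" "f1 (Q k' (k - k')) k' = k"
    using Q_act[of k' "k - k'"] k k' False by auto
  have k'I: "k' \<in> {1..d}" using k' by auto
  have Qc: "Q k' (k - k') \<in> tree_aut d" using Q G_car by auto
  show ?thesis
    using f1_inv[OF Qc one_in] f1_inv[OF Qc k'I] Q G_inv inv_one' by (intro bexI[of _ "\<iota> (Q k' (k - k'))"]) auto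
qed

definition Xk where
  "Xk k = {x. \<exists>g\<in>GG. st g \<and> g\<down>1 = x \<and> (\<forall>z\<in>{1..d}. z \<noteq> 1 \<and> z \<noteq> k \<longrightarrow> g\<down>z = \<e>)}"

lemma Xk_mono: assumes k: "k \<in> {2..d}" and k': "k' \<in> {2..d}" shows "Xk k \<subseteq> Xk k'"
proof
  fix x assume "x \<in> Xk k"
  then obtain g where g: "g \<in> GG" "st g" "g\<down>1 = x" "\<forall>z\<in>{1..d}. z \<noteq> 1 \<and> z \<noteq> k \<longrightarrow> g\<down>z = \<e>"
    unfolding Xk_def by blast
  obtain r where r: "r \<in> GG" "f1 r 1 = 1" "r\<down>1 = \<e>" "f1 r k = k'" using mover[OF k k'] by blast
  have rc: "r \<in> tree_aut d" using G_car r by auto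
  have kI: "k \<in> {1..d}" using k by auto
  let ?c = "\<iota> r \<cdot> g \<cdot> r"
  have c: "?c \<in> GG" using r g G_mult G_inv by auto
  have cs: "st ?c" using conj_st[OF g(2) rc] by blast
  have c1: "?c\<down>1 = x"
    using conj_st(2)[OF g(2) rc one_in] r g inv_one' l_one' r_one' sect_tree_aut G_car one_in by auto
  have cz: "?c\<down>z = \<e>" if z: "z \<in> {1..d}" "z \<noteq> 1" "z \<noteq> k'" for z
  proof -
    obtain y where y: "y \<in> {1..d}" "f1 r y = z" using f1_surj[OF rc z(1)] by blast
    have "y \<noteq> 1" using y z r by auto
    moreover have "y \<noteq> k" using y z r by auto
    ultimately have "g\<down>y = \<e>" using g(4) y by blast
    then show ?thesis using conj_st(2)[OF g(2) rc y(1)] y conj_e[OF sect_tree_aut[OF rc y(1)]] by simp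
  qed
  show "x \<in> Xk k'" unfolding Xk_def using c cs c1 cz by blast
qed

abbreviation "B \<equiv> Xk 2"

lemma two_in: "(2::nat) \<in> {2..d}" using d3 by auto

lemma Xk_eq: "k \<in> {2..d} \<Longrightarrow> Xk k = B"
  using Xk_mono two_in by blast

lemma B_G: "x \<in> B \<Longrightarrow> x \<in> GG"
  unfolding Xk_def using sect_G one_in by auto

lemma B_one: "\<e> \<in> B"
  unfolding Xk_def using G_one st_one sect_one one_in by (intro CollectI bexI[of _ "\<e>"]) auto

lemma B_mult: assumes "x \<in> B" "y \<in> B" shows "x \<cdot> y \<in> B"
proof -
  obtain g where g: "g \<in> GG" "st g" "g\<down>1 = x" "\<forall>z\<in>{1..d}. z \<noteq> 1 \<and> z \<noteq> 2 \<longrightarrow> g\<down>z = \<e>"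
    using assms(1) unfolding Xk_def by blast
  obtain h where h: "h \<in> GG" "st h" "h\<down>1 = y" "\<forall>z\<in>{1..d}. z \<noteq> 1 \<and> z \<noteq> 2 \<longrightarrow> h\<down>z = \<e>"
    using assms(2) unfolding Xk_def by blast
  show ?thesis unfolding Xk_def
    using g h st_mult[OF g(2) h(2)] G_mult[OF g(1) h(1)] one_in l_one'[OF e_car]
    by (intro CollectI bexI[of _ "g \<cdot> h"]) auto
qed

lemma B_inv: assumes "x \<in> B" shows "\<iota> x \<in> B"
proof -
  obtain g where g: "g \<in> GG" "st g" "g\<down>1 = x" "\<forall>z\<in>{1..d}. z \<noteq> 1 \<and> z \<noteq> 2 \<longrightarrow> g\<down>z = \<e>"
    using assms(1) unfolding Xk_def by blast
  show ?thesis unfolding Xk_def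
    using g st_inv[OF g(2)] G_inv[OF g(1)] one_in inv_one'
    by (intro CollectI bexI[of _ "\<iota> g"]) auto
qed

end


context tree_odd begin

lemma B_conj: assumes h: "h \<in> GG" and x: "x \<in> B" shows "\<iota> h \<cdot> x \<cdot> h \<in> B"
proof -
  obtain g where g: "g \<in> GG" "st g" "g\<down>1 = x" "\<forall>z\<in>{1..d}. z \<noteq> 1 \<and> z \<noteq> 2 \<longrightarrow> g\<down>z = \<e>"
    using x unfolding Xk_def by blast
  obtain s where s: "s \<in> GG" "f1 s 1 = 1" "s\<down>1 = h" using fractal h by blast
  have sc: "s \<in> tree_aut d" using G_car s by auto
  let ?c = "\<iota> s \<cdot> g \<cdot> s"
  let ?k = "f1 s 2"
  have tI: "(2::nat) \<in> {1..d}" using d3 by auto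
  have k: "?k \<in> {2..d}" using f1_range[OF sc tI] f1_bij[OF sc tI one_in] s by auto
  have c: "?c \<in> GG" using s g G_mult G_inv by auto
  have cs: "st ?c" using conj_st[OF g(2) sc] by blast
  have c1: "?c\<down>1 = \<iota> h \<cdot> x \<cdot> h" using conj_st(2)[OF g(2) sc one_in] s g by auto
  have cz: "?c\<down>z = \<e>" if z: "z \<in> {1..d}" "z \<noteq> 1" "z \<noteq> ?k" for z
  proof -
    obtain y where y: "y \<in> {1..d}" "f1 s y = z" using f1_surj[OF sc z(1)] by blast
    have "y \<noteq> 1" using y z s by auto
    moreover have "y \<noteq> 2" using y z s by auto
    ultimately have "g\<down>y = \<e>" using g(4) y by blast
    then show ?thesis using conj_st(2)[OF g(2) sc y(1)] y conj_e[OF sect_tree_aut[OF sc y(1)]] by simp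
  qed
  have "\<iota> h \<cdot> x \<cdot> h \<in> Xk ?k" unfolding Xk_def using c cs c1 cz by blast
  then show ?thesis using Xk_eq[OF k] by simp
qed

lemma B_conj': assumes h: "h \<in> GG" and x: "x \<in> B" shows "h \<cdot> x \<cdot> \<iota> h \<in> B"
  using B_conj[OF G_inv[OF h] x] G_car[OF h] by (metis A.inv_inv carrier_AutT)

lemma conj_cancel: "x \<in> tree_aut d \<Longrightarrow> y \<in> tree_aut d \<Longrightarrow> y \<cdot> (\<iota> y \<cdot> x \<cdot> y) \<cdot> \<iota> y = x"
  by (metis A.inv_closed A.m_assoc A.m_closed A.r_inv A.l_inv A.l_one A.r_one carrier_AutT)

lemma B_pair:
  assumes g: "g \<in> GG" "st g" and k: "k \<in> {1..d}" "k' \<in> {1..d}" "k \<noteq> k'"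
    and supp: "\<forall>z\<in>{1..d}. z \<noteq> k \<and> z \<noteq> k' \<longrightarrow> g\<down>z = \<e>"
  shows "g\<down>k \<in> B"
proof -
  obtain t0 where t0: "t0 \<in> GG" "f1 t0 1 = k" using level1_trans[OF k(1)] by blast
  let ?t = "\<iota> t0"
  have t: "?t \<in> GG" "f1 ?t k = 1" using G_inv t0 f1_inv(1)[OF G_car[OF t0(1)] one_in] by auto
  have tc: "?t \<in> tree_aut d" using G_car t by auto
  let ?c = "\<iota> ?t \<cdot> g \<cdot> ?t"
  let ?m = "f1 ?t k'"
  have m: "?m \<in> {2..d}" using f1_range[OF tc k(2)] f1_bij[OF tc k(1) k(2)] t k by auto
  have c: "?c \<in> GG" using t g G_mult G_inv by auto
  have cs: "st ?c" using conj_st[OF g(2) tc] by blast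
  have c1: "?c\<down>1 = \<iota> (?t\<down>k) \<cdot> g\<down>k \<cdot> ?t\<down>k" using conj_st(2)[OF g(2) tc k(1)] t by simp
  have cz: "?c\<down>z = \<e>" if z: "z \<in> {1..d}" "z \<noteq> 1" "z \<noteq> ?m" for z
  proof -
    obtain y where y: "y \<in> {1..d}" "f1 ?t y = z" using f1_surj[OF tc z(1)] by blast
    have "y \<noteq> k" using y z t by auto
    moreover have "y \<noteq> k'" using y z t by auto
    ultimately have "g\<down>y = \<e>" using supp y by blast
    then show ?thesis using conj_st(2)[OF g(2) tc y(1)] y conj_e[OF sect_tree_aut[OF tc y(1)]] by simp
  qed
  have "\<iota> (?t\<down>k) \<cdot> g\<down>k \<cdot> ?t\<down>k \<in> Xk ?m" unfolding Xk_def using c cs c1 cz by blast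
  then have X: "\<iota> (?t\<down>k) \<cdot> g\<down>k \<cdot> ?t\<down>k \<in> B" using Xk_eq[OF m] by simp
  have tk: "?t\<down>k \<in> GG" using sect_G[OF t(1) k(1)] .
  have "?t\<down>k \<cdot> (\<iota> (?t\<down>k) \<cdot> g\<down>k \<cdot> ?t\<down>k) \<cdot> \<iota> (?t\<down>k) \<in> B" using B_conj'[OF tk X] .
  then show ?thesis using conj_cancel[OF sect_tree_aut[OF G_car[OF g(1)] k(1)] G_car[OF tk]] by simp
qed

lemma b_in_B: assumes k: "k \<in> {1..d}" shows "a k \<cdot> a (nxt d k) \<in> B"
proof -
  have n: "nxt d k \<in> {1..d}" "nxt d k \<noteq> k" using nxt_range[OF k] nxt_neq[OF k] by auto
  have ac: "a k \<in> tree_aut d" using gen_a_tree_aut[OF k] .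
  let ?g = "a k \<cdot> a k"
  have g: "?g \<in> GG" using G_mult a_G k by auto
  have f: "f1 ?g z = z" if z: "z \<in> {1..d}" for z
    using f1_mult[OF ac ac z] f1_gen[OF k z] f1_gen[OF k k] f1_gen[OF k n(1)] n by auto
  have gs: "st ?g" unfolding st_def using f g G_car by auto
  have gk: "?g\<down>k = a k \<cdot> a (nxt d k)"
    using sect_mult[OF ac ac k] f1_gen[OF k k] sect_gen[OF k k] sect_gen[OF k n(1)] n by auto
  have sz: "?g\<down>z = \<e>" if z: "z \<in> {1..d}" "z \<noteq> k" "z \<noteq> nxt d k" for z
    using sect_mult[OF ac ac z(1)] f1_gen[OF k z(1)] sect_gen[OF k z(1)] z l_one'[OF e_car] by auto
  show ?thesis using B_pair[OF g gs k n(1) n(2)[symmetric]] sz gk by auto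
qed

end


context tree begin

lemma gA: "x \<in> tree_aut d \<Longrightarrow> y \<in> tree_aut d \<Longrightarrow> z \<in> tree_aut d \<Longrightarrow> x \<cdot> y \<cdot> z = x \<cdot> (y \<cdot> z)"
  by (metis A.m_assoc carrier_AutT)
lemma gC: "x \<in> tree_aut d \<Longrightarrow> y \<in> tree_aut d \<Longrightarrow> x \<cdot> y \<in> tree_aut d"
  by (metis A.m_closed carrier_AutT)
lemma gI: "x \<in> tree_aut d \<Longrightarrow> \<iota> x \<in> tree_aut d" by (rule inv_car)
lemma gL: "x \<in> tree_aut d \<Longrightarrow> y \<in> tree_aut d \<Longrightarrow> \<iota> x \<cdot> (x \<cdot> y) = y"
  by (metis A.inv_closed A.l_inv A.l_one A.m_assoc carrier_AutT)
lemma gR: "x \<in> tree_aut d \<Longrightarrow> y \<in> tree_aut d \<Longrightarrow> x \<cdot> (\<iota> x \<cdot> y) = y"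
  by (metis A.inv_closed A.r_inv A.l_one A.m_assoc carrier_AutT)
lemma gli: "x \<in> tree_aut d \<Longrightarrow> \<iota> x \<cdot> x = \<e>" by (metis A.l_inv carrier_AutT)
lemma gri: "x \<in> tree_aut d \<Longrightarrow> x \<cdot> \<iota> x = \<e>" by (metis A.r_inv carrier_AutT)
lemma gii: "x \<in> tree_aut d \<Longrightarrow> \<iota> (\<iota> x) = x" by (metis A.inv_inv carrier_AutT)
lemma gim: "x \<in> tree_aut d \<Longrightarrow> y \<in> tree_aut d \<Longrightarrow> \<iota> (x \<cdot> y) = \<iota> y \<cdot> \<iota> x"
  by (metis A.inv_mult_group carrier_AutT)

lemmas gsimps = gA gC gI gL gR gli gri gii gim l_one' r_one' inv_one' e_car

end

context tree_odd begin

definition cg where "cg u v \<longleftrightarrow> \<iota> u \<cdot> v \<in> B"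

lemma GT: "u \<in> GG \<Longrightarrow> u \<in> tree_aut d" by (rule G_car)

lemma cg_refl: "u \<in> GG \<Longrightarrow> cg u u"
  unfolding cg_def using B_one G_car gli by auto

lemma cg_sym: assumes "u \<in> GG" "v \<in> GG" "cg u v" shows "cg v u"
proof -
  have "\<iota> (\<iota> u \<cdot> v) \<in> B" using B_inv assms(3) cg_def by auto
  then show ?thesis unfolding cg_def using G_car assms by (simp add: gsimps)
qed

lemma cg_trans: assumes "u \<in> GG" "v \<in> GG" "w \<in> GG" "cg u v" "cg v w" shows "cg u w"
proof -
  have "(\<iota> u \<cdot> v) \<cdot> (\<iota> v \<cdot> w) \<in> B" using B_mult assms(4,5) cg_def by auto
  then show ?thesis unfolding cg_def using G_car assms by (simp add: gsimps)
qed

lemma cg_lmult: assumes "u \<in> GG" "v \<in> GG" "w \<in> GG" "cg u v" shows "cg (w \<cdot> u) (w \<cdot> v)"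
  using assms G_car unfolding cg_def by (simp add: gsimps)

lemma cg_rmult: assumes "u \<in> GG" "v \<in> GG" "w \<in> GG" "cg u v" shows "cg (u \<cdot> w) (v \<cdot> w)"
proof -
  have "\<iota> w \<cdot> (\<iota> u \<cdot> v) \<cdot> w \<in> B" using B_conj assms cg_def by auto
  then show ?thesis unfolding cg_def using G_car assms by (simp add: gsimps)
qed

lemma cg_inv: assumes "u \<in> GG" "v \<in> GG" "cg u v" shows "cg (\<iota> u) (\<iota> v)"
proof -
  have "\<iota> (\<iota> u \<cdot> v) \<in> B" using B_inv assms(3) cg_def by auto
  then have "u \<cdot> \<iota> (\<iota> u \<cdot> v) \<cdot> \<iota> u \<in> B" using B_conj' assms by auto
  then show ?thesis unfolding cg_def using G_car assms by (simp add: gsimps)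
qed

lemma aG: "k \<in> {1..d} \<Longrightarrow> a k \<in> GG" by (rule a_G)
lemma aiG: "k \<in> {1..d} \<Longrightarrow> \<iota> (a k) \<in> GG" by (rule G_inv[OF a_G])
lemma a1G: "a 1 \<in> GG" "\<iota> (a 1) \<in> GG" using aG aiG one_in by auto

lemma ainv_cg: assumes k: "k \<in> {1..d}" shows "cg (a (nxt d k)) (\<iota> (a k))"
proof -
  have "cg (\<iota> (a k)) (a (nxt d k))"
    unfolding cg_def using b_in_B[OF k] gii[OF G_car[OF aG[OF k]]] by simp
  then show ?thesis using cg_sym aiG[OF k] aG[OF nxt_range[OF k]] by blast
qed

lemma a_parity: "1 \<le> k \<Longrightarrow> k \<le> d \<Longrightarrow> (odd k \<longrightarrow> cg (a k) (a 1)) \<and> (even k \<longrightarrow> cg (a k) (\<iota> (a 1)))"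
proof (induction k)
  case 0 then show ?case by simp
next
  case (Suc k)
  show ?case
  proof (cases "k = 0")
    case True then show ?thesis using cg_refl a1G by auto
  next
    case False
    have k: "k \<in> {1..d}" using False Suc.prems by auto
    have nx: "nxt d k = Suc k" using nxt_lt Suc.prems by simp
    have c: "cg (a (Suc k)) (\<iota> (a k))" using ainv_cg[OF k] nx by simp
    have sk: "Suc k \<in> {1..d}" using Suc.prems by auto
    have IH: "(odd k \<longrightarrow> cg (a k) (a 1)) \<and> (even k \<longrightarrow> cg (a k) (\<iota> (a 1)))" using Suc False by auto
    show ?thesis
    proof (cases "odd k")
      case True
      then have "cg (\<iota> (a k)) (\<iota> (a 1))" using IH cg_inv aG[OF k] a1G by blast
      then show ?thesis using True cg_trans[OF aG[OF sk] aiG[OF k] a1G(2) c] by auto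
    next
      case False
      then have "cg (\<iota> (a k)) (\<iota> (\<iota> (a 1)))" using IH cg_inv aG[OF k] a1G by blast
      then have "cg (\<iota> (a k)) (a 1)" using gii[OF G_car[OF a1G(1)]] by simp
      then show ?thesis using False cg_trans[OF aG[OF sk] aiG[OF k] a1G(1) c] by auto
    qed
  qed
qed

lemma dI: "d \<in> {1..d}" using d3 by auto

lemma a1inv: "cg (\<iota> (a 1)) (a 1)"
proof -
  have ad: "cg (a d) (a 1)" using a_parity[of d] oddd d3 by auto
  have "cg (\<iota> (a d)) (\<iota> (a 1))" using cg_inv[OF aG[OF dI] a1G(1) ad] .
  moreover have "cg (a 1) (\<iota> (a d))" using ainv_cg[OF dI] nxt_d by simp
  ultimately have "cg (a 1) (\<iota> (a 1))" using cg_trans a1G aiG[OF dI] by blast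
  then show ?thesis using cg_sym a1G by blast
qed

lemma all_a: "k \<in> {1..d} \<Longrightarrow> cg (a k) (a 1)"
  using a_parity[of k] a1inv cg_trans[OF aG _ a1G(1), of k "\<iota> (a 1)"] a1G by auto

lemma P_cg: "k \<le> d \<Longrightarrow> (odd k \<longrightarrow> cg (P k) (a 1)) \<and> (even k \<longrightarrow> cg (P k) \<e>)"
proof (induction k)
  case 0 then show ?case using cg_refl G_one by simp
next
  case (Suc k)
  have sk: "Suc k \<in> {1..d}" using Suc.prems by auto
  have PG: "P k \<in> GG" using P_G Suc.prems by simp
  have IH: "(odd k \<longrightarrow> cg (P k) (a 1)) \<and> (even k \<longrightarrow> cg (P k) \<e>)" using Suc by auto
  have ak: "cg (a (Suc k)) (a 1)" using all_a[OF sk] .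
  show ?case
  proof (cases "even k")
    case True
    then have "cg (P k \<cdot> a (Suc k)) (\<e> \<cdot> a (Suc k))" using IH cg_rmult PG G_one aG[OF sk] by blast
    then have "cg (P (Suc k)) (a (Suc k))" using l_one'[OF G_car[OF aG[OF sk]]] by simp
    then show ?thesis using True cg_trans[OF P_G[OF Suc.prems] aG[OF sk] a1G(1)] ak by auto
  next
    case False
    then have "cg (P k \<cdot> a (Suc k)) (a 1 \<cdot> a (Suc k))" using IH cg_rmult PG a1G aG[OF sk] by blast
    moreover have "cg (a (Suc k)) (\<iota> (a 1))" using ak a1inv cg_sym cg_trans aG[OF sk] a1G by meson
    then have "cg (a 1 \<cdot> a (Suc k)) (a 1 \<cdot> \<iota> (a 1))" using cg_lmult aG[OF sk] a1G by blast
    ultimately have "cg (P (Suc k)) \<e>"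
      using cg_trans[OF P_G[OF Suc.prems] G_mult[OF a1G(1) aG[OF sk]] G_one] gri[OF G_car[OF a1G(1)]] by simp
    then show ?thesis using False by auto
  qed
qed

lemma key_coset: "k \<in> {1..d} \<Longrightarrow> \<iota> (P d) \<cdot> a k \<in> B"
proof -
  assume k: "k \<in> {1..d}"
  have "cg (P d) (a 1)" using P_cg[of d] oddd by simp
  moreover have "cg (a 1) (a k)" using all_a[OF k] cg_sym aG[OF k] a1G by blast
  ultimately have "cg (P d) (a k)" using cg_trans P_G a1G aG[OF k] by blast
  then show ?thesis unfolding cg_def .
qed

end


context tree begin

definition Delta where
  "Delta m y \<longleftrightarrow> (\<exists>g\<in>DG. st g \<and> g\<down>m = y \<and> (\<forall>z\<in>{1..d}. z \<noteq> m \<longrightarrow> g\<down>z = \<e>))"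

definition K1 where "K1 = {y. Delta 1 y}"

definition cm where "cm g h = \<iota> g \<cdot> \<iota> h \<cdot> g \<cdot> h"

lemma st_car: "st g \<Longrightarrow> g \<in> tree_aut d" unfolding st_def by auto

lemma K1_one: "\<e> \<in> K1"
  unfolding K1_def Delta_def using DG_one st_one sect_one one_in by (intro CollectI bexI[of _ "\<e>"]) auto

lemma K1_mult: assumes "x \<in> K1" "y \<in> K1" shows "x \<cdot> y \<in> K1"
proof -
  obtain g where g: "g \<in> DG" "st g" "g\<down>1 = x" "\<forall>z\<in>{1..d}. z \<noteq> 1 \<longrightarrow> g\<down>z = \<e>"
    using assms(1) unfolding K1_def Delta_def by blast
  obtain h where h: "h \<in> DG" "st h" "h\<down>1 = y" "\<forall>z\<in>{1..d}. z \<noteq> 1 \<longrightarrow> h\<down>z = \<e>"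
    using assms(2) unfolding K1_def Delta_def by blast
  show ?thesis unfolding K1_def Delta_def
    using g h st_mult[OF g(2) h(2)] DG_mult[OF g(1) h(1)] one_in l_one'[OF e_car]
    by (intro CollectI bexI[of _ "g \<cdot> h"]) auto
qed

lemma K1_inv: assumes "x \<in> K1" shows "\<iota> x \<in> K1"
proof -
  obtain g where g: "g \<in> DG" "st g" "g\<down>1 = x" "\<forall>z\<in>{1..d}. z \<noteq> 1 \<longrightarrow> g\<down>z = \<e>"
    using assms(1) unfolding K1_def Delta_def by blast
  show ?thesis unfolding K1_def Delta_def
    using g st_inv[OF g(2)] DG_inv[OF g(1)] one_in inv_one'
    by (intro CollectI bexI[of _ "\<iota> g"]) auto
qed

lemma cm_st: assumes "st g" "st h" shows "st (cm g h)" "z \<in> {1..d} \<Longrightarrow> (cm g h)\<down>z = cm (g\<down>z) (h\<down>z)"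
  unfolding cm_def using assms st_mult st_inv by metis+

lemma cm_e1: "x \<in> tree_aut d \<Longrightarrow> cm x \<e> = \<e>" unfolding cm_def by (simp add: gsimps)
lemma cm_e2: "x \<in> tree_aut d \<Longrightarrow> cm \<e> x = \<e>" unfolding cm_def by (simp add: gsimps)

lemma three_in: "(3::nat) \<in> {2..d}" using d3 by auto

end

context tree_odd begin

lemma K1_conj: assumes h: "h \<in> GG" and y: "y \<in> K1" shows "\<iota> h \<cdot> y \<cdot> h \<in> K1"
proof -
  obtain g where g: "g \<in> DG" "st g" "g\<down>1 = y" "\<forall>z\<in>{1..d}. z \<noteq> 1 \<longrightarrow> g\<down>z = \<e>"
    using y unfolding K1_def Delta_def by blast
  obtain s where s: "s \<in> GG" "f1 s 1 = 1" "s\<down>1 = h" using fractal h by blast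
  have sc: "s \<in> tree_aut d" using G_car s by auto
  let ?c = "\<iota> s \<cdot> g \<cdot> s"
  have c: "?c \<in> DG" using DG_normal'[OF s(1) g(1)] .
  have cs: "st ?c" using conj_st[OF g(2) sc] by blast
  have c1: "?c\<down>1 = \<iota> h \<cdot> y \<cdot> h" using conj_st(2)[OF g(2) sc one_in] s g by auto
  have cz: "?c\<down>z = \<e>" if z: "z \<in> {1..d}" "z \<noteq> 1" for z
  proof -
    obtain x where x: "x \<in> {1..d}" "f1 s x = z" using f1_surj[OF sc z(1)] by blast
    have "x \<noteq> 1" using x z s by auto
    then have "g\<down>x = \<e>" using g(4) x by blast
    then show ?thesis using conj_st(2)[OF g(2) sc x(1)] x conj_e[OF sect_tree_aut[OF sc x(1)]] by simp
  qed
  show ?thesis unfolding K1_def Delta_def using c cs c1 cz by blast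
qed

lemma K1_conj': assumes h: "h \<in> GG" and y: "y \<in> K1" shows "h \<cdot> y \<cdot> \<iota> h \<in> K1"
  using K1_conj[OF G_inv[OF h] y] G_car[OF h] by (metis A.inv_inv carrier_AutT)

lemma F1: assumes b: "b \<in> B" and b': "b' \<in> B" shows "cm b b' \<in> K1"
proof -
  obtain g where g: "g \<in> GG" "st g" "g\<down>1 = b" "\<forall>z\<in>{1..d}. z \<noteq> 1 \<and> z \<noteq> 2 \<longrightarrow> g\<down>z = \<e>"
    using b unfolding Xk_def by blast
  have "b' \<in> Xk 3" using b' Xk_eq[OF three_in] by simp
  then obtain h where h: "h \<in> GG" "st h" "h\<down>1 = b'" "\<forall>z\<in>{1..d}. z \<noteq> 1 \<and> z \<noteq> 3 \<longrightarrow> h\<down>z = \<e>"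
    unfolding Xk_def by blast
  have c: "cm g h \<in> DG" unfolding cm_def using comm_DG'[OF g(1) h(1)] .
  have cs: "st (cm g h)" using cm_st[OF g(2) h(2)] by blast
  have cz: "(cm g h)\<down>z = \<e>" if z: "z \<in> {1..d}" "z \<noteq> 1" for z
  proof -
    have gz: "g\<down>z \<in> tree_aut d" "h\<down>z \<in> tree_aut d"
      using sect_tree_aut[OF st_car[OF g(2)] z(1)] sect_tree_aut[OF st_car[OF h(2)] z(1)] by auto
    have "g\<down>z = \<e> \<or> h\<down>z = \<e>" using g(4) h(4) z by force
    then show ?thesis using cm_st(2)[OF g(2) h(2) z(1)] cm_e1 cm_e2 gz by auto
  qed
  show ?thesis unfolding K1_def Delta_def
    using c cs cz cm_st(2)[OF g(2) h(2) one_in] g h by (intro CollectI bexI[of _ "cm g h"]) auto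
qed

lemma P_two: "1 \<le> k \<Longrightarrow> k < d \<Longrightarrow> f1 (P k) 2 = 1 \<and> (P k)\<down>2 = a 2"
proof (induction k)
  case 0 then show ?case by simp
next
  case (Suc k)
  have tI: "(2::nat) \<in> {1..d}" using d3 by auto
  show ?case
  proof (cases "k = 0")
    case True
    have a1: "a 1 \<in> tree_aut d" using gen_a_tree_aut one_in by auto
    have n1: "nxt d 1 = 2" using nxt_lt d3 by simp
    show ?thesis using True f1_mult[OF e_car a1 tI] sect_mult[OF e_car a1 tI] f1_one[OF tI] sect_one[OF tI]
      f1_gen[OF one_in tI] sect_gen[OF one_in tI] n1 l_one' gen_a_tree_aut[OF tI] by simp
  next
    case False
    have IH: "f1 (P k) 2 = 1" "(P k)\<down>2 = a 2" using Suc False by auto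
    have sk: "Suc k \<in> {1..d}" using Suc.prems by auto
    have Pk: "P k \<in> tree_aut d" using P_car Suc.prems by simp
    have ak: "a (Suc k) \<in> tree_aut d" using gen_a_tree_aut[OF sk] .
    have nx: "nxt d (Suc k) = Suc (Suc k)" using nxt_lt Suc.prems by simp
    have f: "f1 (a (Suc k)) 1 = 1" "(a (Suc k))\<down>1 = \<e>"
      using f1_gen[OF sk one_in] sect_gen[OF sk one_in] nx False by auto
    show ?thesis using f1_mult[OF Pk ak tI] sect_mult[OF Pk ak tI] IH f
      r_one'[OF gen_a_tree_aut[OF tI]] by simp
  qed
qed

lemma F2: assumes b: "b \<in> B" shows "cm b (P d) \<in> K1"
proof -
  have tI: "(2::nat) \<in> {1..d}" using d3 by auto
  let ?y = "P (d - 1) \<cdot> \<iota> (a 1) \<cdot> a d"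
  have yG: "?y \<in> GG" using P_G[of "d - 1"] G_mult G_inv a_G one_in dI by auto
  have yc: "?y \<in> tree_aut d" using G_car yG by simp
  have Pc: "P (d - 1) \<in> tree_aut d" using P_car by simp
  have a1c: "a 1 \<in> tree_aut d" and adc: "a d \<in> tree_aut d" and a2c: "a 2 \<in> tree_aut d"
    using gen_a_tree_aut one_in dI tI by auto
  have ia1: "\<iota> (a 1) \<in> tree_aut d" using gI[OF a1c] .
  have Pia: "P (d - 1) \<cdot> \<iota> (a 1) \<in> tree_aut d" using gC[OF Pc ia1] .
  have n1: "nxt d 1 = 2" using nxt_lt d3 by simp
  have A2: "f1 (P (d - 1)) 1 = d" "(P (d - 1))\<down>1 = P (d - 1)" using P_act[of "d - 1"] d3 by auto
  have B2: "f1 (P (d - 1)) 2 = 1" "(P (d - 1))\<down>2 = a 2" using P_two[of "d - 1"] d3 by auto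
  have a1d: "f1 (a 1) d = d" "(a 1)\<down>d = \<e>" using f1_gen[OF one_in dI] sect_gen[OF one_in dI] n1 d3 by auto
  have a12: "f1 (a 1) 2 = 1" "(a 1)\<down>2 = a 2" using f1_gen[OF one_in tI] sect_gen[OF one_in tI] n1 by auto
  have i1d: "f1 (\<iota> (a 1)) d = d" "(\<iota> (a 1))\<down>d = \<e>" using f1_inv[OF a1c dI] a1d inv_one' by auto
  have i12: "f1 (\<iota> (a 1)) 1 = 2" "(\<iota> (a 1))\<down>1 = \<iota> (a 2)" using f1_inv[OF a1c tI] a12 by auto
  have add: "f1 (a d) d = 1" "(a d)\<down>d = a d" using f1_gen[OF dI dI] sect_gen[OF dI dI] nxt_d by auto
  have ad2: "f1 (a d) 2 = 2" "(a d)\<down>2 = \<e>" using f1_gen[OF dI tI] sect_gen[OF dI tI] nxt_d d3 by auto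
  have Pd: "P d = P (d - 1) \<cdot> a d" using P.simps(2)[of "d - 1"] d3 by simp
  have y1: "f1 ?y 1 = 1" "?y\<down>1 = P d"
    using f1_mult[OF Pia adc one_in] f1_mult[OF Pc ia1 one_in] sect_mult[OF Pia adc one_in]
      sect_mult[OF Pc ia1 one_in] A2 i1d add Pd r_one'[OF Pc] by simp_all
  have y2: "f1 ?y 2 = 2" "?y\<down>2 = \<e>"
    using f1_mult[OF Pia adc tI] f1_mult[OF Pc ia1 tI] sect_mult[OF Pia adc tI]
      sect_mult[OF Pc ia1 tI] B2 i12 ad2 gri[OF a2c] r_one'[OF e_car] by simp_all
  obtain g where g: "g \<in> GG" "st g" "g\<down>1 = b" "\<forall>z\<in>{1..d}. z \<noteq> 1 \<and> z \<noteq> 2 \<longrightarrow> g\<down>z = \<e>"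
    using b unfolding Xk_def by blast
  have gc: "g \<in> tree_aut d" using st_car[OF g(2)] .
  let ?c = "\<iota> ?y \<cdot> g \<cdot> ?y"
  have cs: "st ?c" using conj_st[OF g(2) yc] by blast
  have c1: "?c\<down>1 = \<iota> (P d) \<cdot> b \<cdot> P d" using conj_st(2)[OF g(2) yc one_in] y1 g by simp
  have c2: "?c\<down>2 = g\<down>2"
    using conj_st(2)[OF g(2) yc tI] y2 inv_one' l_one' r_one' sect_tree_aut[OF gc tI] by simp
  have cz: "?c\<down>z = \<e>" if z: "z \<in> {1..d}" "z \<noteq> 1" "z \<noteq> 2" for z
  proof -
    obtain x where x: "x \<in> {1..d}" "f1 ?y x = z" using f1_surj[OF yc z(1)] by blast
    have "x \<noteq> 1" "x \<noteq> 2" using x z y1 y2 by auto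
    then have "g\<down>x = \<e>" using g(4) x by blast
    then show ?thesis using conj_st(2)[OF g(2) yc x(1)] x conj_e[OF sect_tree_aut[OF yc x(1)]] by simp
  qed
  let ?w = "\<iota> g \<cdot> ?c"
  have wD: "?w \<in> DG"
  proof -
    have "?w = \<iota> g \<cdot> \<iota> ?y \<cdot> g \<cdot> ?y" using gc yc by (simp add: gsimps)
    then show ?thesis using comm_DG'[OF g(1) yG] by simp
  qed
  have ws: "st ?w" using st_mult[OF st_inv(1)[OF g(2)] cs] by blast
  have wsec: "?w\<down>z = \<iota> (g\<down>z) \<cdot> ?c\<down>z" if "z \<in> {1..d}" for z
    using st_mult(2)[OF st_inv(1)[OF g(2)] cs that] st_inv(2)[OF g(2) that] by simp
  have Pdc: "P d \<in> tree_aut d" using P_car by simp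
  have bc: "b \<in> tree_aut d" using g(3) sect_tree_aut[OF gc one_in] by simp
  have w1: "?w\<down>1 = cm b (P d)" using wsec[OF one_in] c1 g(3) bc Pdc unfolding cm_def by (simp add: gsimps)
  have wz: "?w\<down>z = \<e>" if z: "z \<in> {1..d}" "z \<noteq> 1" for z
  proof (cases "z = 2")
    case True
    then show ?thesis using wsec[OF z(1)] c2 gli[OF sect_tree_aut[OF gc tI]] by simp
  next
    case False
    then show ?thesis using wsec[OF z(1)] cz[OF z(1) z(2) False] g(4) z inv_one' l_one'[OF e_car] by simp
  qed
  show ?thesis unfolding K1_def Delta_def using wD ws w1 wz by blast
qed

end


context tree_odd begin

lemma K1_G: "y \<in> K1 \<Longrightarrow> y \<in> GG"
  unfolding K1_def Delta_def using sect_G DG_sub_G one_in by blast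

lemma cm_sym: assumes g: "g \<in> GG" and h: "h \<in> GG" and c: "cm g h \<in> K1" shows "cm h g \<in> K1"
proof -
  have "\<iota> (cm g h) \<in> K1" using K1_inv c .
  moreover have "\<iota> (cm g h) = cm h g" unfolding cm_def using G_car g h by (simp add: gsimps)
  ultimately show ?thesis by simp
qed

definition C where "C h = {g \<in> GG. cm g h \<in> K1}"

lemma C_one: "h \<in> GG \<Longrightarrow> \<e> \<in> C h"
  unfolding C_def using G_one cm_e2 G_car K1_one by auto

lemma C_mult: assumes h: "h \<in> GG" and g: "g \<in> C h" and g': "g' \<in> C h" shows "g \<cdot> g' \<in> C h"
proof -
  have gG: "g \<in> GG" "g' \<in> GG" "cm g h \<in> K1" "cm g' h \<in> K1" using g g' C_def by auto
  have "\<iota> g' \<cdot> cm g h \<cdot> g' \<in> K1" using K1_conj gG by blast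
  then have "(\<iota> g' \<cdot> cm g h \<cdot> g') \<cdot> cm g' h \<in> K1" using K1_mult gG by blast
  moreover have "(\<iota> g' \<cdot> cm g h \<cdot> g') \<cdot> cm g' h = cm (g \<cdot> g') h"
    unfolding cm_def using G_car gG h by (simp add: gsimps)
  ultimately show ?thesis unfolding C_def using G_mult gG by auto
qed

lemma C_inv: assumes h: "h \<in> GG" and g: "g \<in> C h" shows "\<iota> g \<in> C h"
proof -
  have gG: "g \<in> GG" "cm g h \<in> K1" using g C_def by auto
  have "g \<cdot> \<iota> (cm g h) \<cdot> \<iota> g \<in> K1" using K1_conj' K1_inv gG by blast
  moreover have "g \<cdot> \<iota> (cm g h) \<cdot> \<iota> g = cm (\<iota> g) h"
    unfolding cm_def using G_car gG h by (simp add: gsimps)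
  ultimately show ?thesis unfolding C_def using G_inv gG by auto
qed

lemma gen_closure:
  assumes one: "\<e> \<in> Y" and mult: "\<And>x y. x \<in> Y \<Longrightarrow> y \<in> Y \<Longrightarrow> x \<cdot> y \<in> Y"
    and inv: "\<And>x. x \<in> Y \<Longrightarrow> \<iota> x \<in> Y" and BY: "B \<subseteq> Y" and PY: "P d \<in> Y"
  shows "GG \<subseteq> Y"
proof -
  have aY: "a k \<in> Y" if k: "k \<in> {1..d}" for k
  proof -
    have "P d \<cdot> (\<iota> (P d) \<cdot> a k) \<in> Y" using mult[OF PY] BY key_coset[OF k] by blast
    then show ?thesis using gR[OF P_car[of d] gen_a_tree_aut[OF k]] by simp
  qed
  show ?thesis
  proof
    fix g assume "g \<in> GG"
    then show "g \<in> Y" unfolding Gd_def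
      by (induction rule: generate.induct) (use one aY inv mult in auto)
  qed
qed

lemma C_all: assumes h: "h \<in> GG" and BC: "B \<subseteq> C h" and PC: "P d \<in> C h" shows "GG \<subseteq> C h"
  using gen_closure[of "C h"] C_one[OF h] C_mult[OF h] C_inv[OF h] BC PC by blast

lemma PdG: "P d \<in> GG" using P_G by simp

lemma step1: assumes b: "b \<in> B" shows "GG \<subseteq> C b"
proof (rule C_all[OF B_G[OF b]])
  show "B \<subseteq> C b" using F1 b B_G unfolding C_def by auto
  show "P d \<in> C b" using F2[OF b] cm_sym[OF B_G[OF b] PdG] PdG unfolding C_def by auto
qed

lemma step2: "GG \<subseteq> C (P d)"
proof (rule C_all[OF PdG])
  show "B \<subseteq> C (P d)" using F2 B_G unfolding C_def by auto
  have "cm (P d) (P d) = \<e>" unfolding cm_def using P_car[of d] by (simp add: gsimps)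
  then show "P d \<in> C (P d)" unfolding C_def using PdG K1_one by auto
qed

lemma all_comm: assumes g: "g \<in> GG" and h: "h \<in> GG" shows "cm g h \<in> K1"
proof -
  have "B \<subseteq> C h" using step1 cm_sym B_G h unfolding C_def by blast
  moreover have "P d \<in> C h" using step2 cm_sym PdG h unfolding C_def by blast
  ultimately show ?thesis using C_all[OF h] g unfolding C_def by blast
qed

lemma DG_K1: "DG \<subseteq> K1"
proof
  fix y assume "y \<in> DG"
  then show "y \<in> K1" unfolding Gd'_def derived_def
  proof (induction rule: generate.induct)
    case one then show ?case using K1_one by simp
  next
    case (incl h)
    then obtain h1 h2 where h: "h1 \<in> GG" "h2 \<in> GG" "h = h1 \<cdot> h2 \<cdot> \<iota> h1 \<cdot> \<iota> h2" by blast
    have "cm (\<iota> h1) (\<iota> h2) = h" unfolding cm_def using h G_car by (simp add: gsimps)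
    then show ?case using all_comm[OF G_inv G_inv] h by metis
  next
    case (inv h)
    then obtain h1 h2 where h: "h1 \<in> GG" "h2 \<in> GG" "h = h1 \<cdot> h2 \<cdot> \<iota> h1 \<cdot> \<iota> h2" by blast
    have "cm (\<iota> h1) (\<iota> h2) = h" unfolding cm_def using h G_car by (simp add: gsimps)
    then show ?case using all_comm[OF G_inv G_inv] h K1_inv by metis
  next
    case (eng h1 h2) then show ?case using K1_mult by blast
  qed
qed

lemma Delta_all: assumes m: "m \<in> {1..d}" and y: "y \<in> DG" shows "Delta m y"
proof -
  obtain t where t: "t \<in> GG" "f1 t 1 = m" using level1_trans[OF m] by blast
  have tc: "t \<in> tree_aut d" using G_car t by auto
  have t1: "t\<down>1 \<in> GG" using sect_G[OF t(1) one_in] .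
  have "t\<down>1 \<cdot> y \<cdot> \<iota> (t\<down>1) \<in> DG" using DG_normal[OF t1 y] .
  then have "t\<down>1 \<cdot> y \<cdot> \<iota> (t\<down>1) \<in> K1" using DG_K1 by blast
  then obtain g where g: "g \<in> DG" "st g" "g\<down>1 = t\<down>1 \<cdot> y \<cdot> \<iota> (t\<down>1)" "\<forall>z\<in>{1..d}. z \<noteq> 1 \<longrightarrow> g\<down>z = \<e>"
    unfolding K1_def Delta_def by blast
  let ?c = "\<iota> t \<cdot> g \<cdot> t"
  have c: "?c \<in> DG" using DG_normal'[OF t(1) g(1)] .
  have cs: "st ?c" using conj_st[OF g(2) tc] by blast
  have yc: "y \<in> tree_aut d" using y DG_sub_G G_car by blast
  have cm': "?c\<down>m = y" using conj_st(2)[OF g(2) tc one_in] t g(3) G_car[OF t1] yc by (simp add: gsimps)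
  have cz: "?c\<down>z = \<e>" if z: "z \<in> {1..d}" "z \<noteq> m" for z
  proof -
    obtain x where x: "x \<in> {1..d}" "f1 t x = z" using f1_surj[OF tc z(1)] by blast
    have "x \<noteq> 1" using x z t by auto
    then have "g\<down>x = \<e>" using g(4) x by blast
    then show ?thesis using conj_st(2)[OF g(2) tc x(1)] x conj_e[OF sect_tree_aut[OF tc x(1)]] by simp
  qed
  show ?thesis unfolding Delta_def using c cs cm' cz by blast
qed

lemma combine:
  assumes h: "\<forall>x\<in>{1..d}. h x \<in> DG"
  shows "F \<subseteq> {1..d} \<Longrightarrow> \<exists>g\<in>DG. st g \<and> (\<forall>x\<in>{1..d}. g\<down>x = (if x \<in> F then h x else \<e>))"
proof (induction F rule: infinite_finite_induct)
  case (infinite F) then show ?case using finite_subset by blast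
next
  case empty then show ?case using DG_one st_one sect_one by auto
next
  case (insert m F)
  obtain g where g: "g \<in> DG" "st g" "\<forall>x\<in>{1..d}. g\<down>x = (if x \<in> F then h x else \<e>)"
    using insert by auto
  have m: "m \<in> {1..d}" using insert by auto
  obtain g' where g': "g' \<in> DG" "st g'" "g'\<down>m = h m" "\<forall>z\<in>{1..d}. z \<noteq> m \<longrightarrow> g'\<down>z = \<e>"
    using Delta_all[OF m] h m unfolding Delta_def by blast
  have hc: "\<And>x. x \<in> {1..d} \<Longrightarrow> h x \<in> tree_aut d" using h DG_sub_G G_car by blast
  have "(g \<cdot> g')\<down>x = (if x \<in> insert m F then h x else \<e>)" if x: "x \<in> {1..d}" for x
    using st_mult(2)[OF g(2) g'(2) x] g(3) g'(3,4) x insert(2) hc[OF x] l_one' r_one' e_car by auto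
  then show ?case using DG_mult[OF g(1) g'(1)] st_mult(1)[OF g(2) g'(2)] by blast
qed

lemma branch:
  assumes h: "\<forall>x\<in>{1..d}. h x \<in> DG"
  shows "(\<lambda>x\<in>{1..d}. h x) \<in> psi1 d ` (DG \<inter> stab1 d GG)"
proof -
  obtain g where g: "g \<in> DG" "st g" "\<forall>x\<in>{1..d}. g\<down>x = h x" using combine[OF h order_refl] by auto
  have "psi1 d g = (\<lambda>x\<in>{1..d}. h x)" unfolding psi1_def using g(3) by auto
  moreover have "g \<in> stab1 d GG"
    unfolding stab1_def using g DG_sub_G tree_aut_single[OF st_car[OF g(2)]] st_def by auto
  ultimately show ?thesis using g(1) by force
qed

end


theorem theorem4p8:
  fixes d :: nat
  assumes "d \<ge> 3" and "odd d"
  shows "spherically_transitive d (Gd d) \<and>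
         (\<forall>h. (\<forall>x \<in> {1..d}. h x \<in> Gd' d) \<longrightarrow>
              (\<lambda>x \<in> {1..d}. h x) \<in> psi1 d ` (Gd' d \<inter> stab1 d (Gd d)))"
proof -
  interpret tree_odd d
    by unfold_locales (use assms in auto)
  show ?thesis using sph branch by blast
qed

end
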